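(* The topological realization $|\mathbb G|$ of the projective Fraïssé limit $\mathbb G$ of the class $\mathcal G$ of finite connected graphs with confluent epimorphisms is a Kelley continuum.
   Context: A graph is a pair $A=(V(A),E(A))$ with $E(A)\subseteq V(A)^2$ reflexive and symmetric. A topological graph is a graph whose vertex set is a compact, second countable, zero-dimensional space and whose edge set is closed. A homomorphism maps edges to edges; an epimorphism is a (continuous) homomorphism surjective on vertices and on edges. A subset $S$ of the vertex set is disconnected if there are nonempty closed subsets $P,Q$ of $S$ with $P\cup Q=S$ and no edge between $P$ and $Q$; otherwise connected; components are maximal connected subsets. An epimorphism $f\colon A\to B$ is confluent if for every connected $Q\subseteq V(B)$ and every component $C$ of $f^{-1}(Q)$, $f(C)=Q$. $\mathcal G$ is the class of finite connected graphs with confluent epimorphisms (a projective Fraïssé class), and $\mathbb G$ is its projective Fraïssé limit: the unique topological graph such that (1) every $A\in\mathcal G$ is the image of a confluent epimorphism from $\mathbb G$; (2) for $A,B\in\mathcal G$ and confluent epimorphisms $f\colon\mathbb G\to A$, $g\colon B\to A$ there is a confluent epimorphism $h\colon\mathbb G\to B$ with $f=g\circ h$; (3) for every $\varepsilon>0$ there is a confluent epimorphism from $\mathbb G$ onto some $A\in\mathcal G$ whose point-preimages have diameter $<\varepsilon$. The edge relation of $\mathbb G$ is an equivalence relation, and the topological realization $|\mathbb G|$ is the quotient space $V(\mathbb G)/E(\mathbb G)$. A continuum $X$ is Kelley if for every subcontinuum $K$, every $p\in K$ and every sequence $p_n\to p$ in $X$ there are subcontinua $K_n\ni p_n$ with $K_n\to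 K$ in the Hausdorff metric. *)

theory Defs
  imports "HOL-Analysis.Analysis"
begin

text \<open>A (topological) graph is given by a topology T (vertex set = topspace T)
  and an edge set E.  Finite graphs carry the discrete topology.\<close>

definition graph :: "'a set \<Rightarrow> ('a \<times> 'a) set \<Rightarrow> bool" where
  "graph V E \<longleftrightarrow> E \<subseteq> V \<times> V \<and> (\<forall>x\<in>V. (x, x) \<in> E) \<and> (\<forall>x y. (x, y) \<in> E \<longrightarrow> (y, x) \<in> E)"

definition gdisconnected :: "'a topology \<Rightarrow> ('a \<times> 'a) set \<Rightarrow> 'a set \<Rightarrow> bool" where
  "gdisconnected T E S \<longleftrightarrow>
     (\<exists>P Q. P \<noteq> {} \<and> Q \<noteq> {} \<and> closedin (subtopology T S) P \<and> closedin (subtopology T S) Q \<and>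
            P \<union> Q = S \<and> (\<forall>p\<in>P. \<forall>q\<in>Q. (p, q) \<notin> E))"

definition gconnected :: "'a topology \<Rightarrow> ('a \<times> 'a) set \<Rightarrow> 'a set \<Rightarrow> bool" where
  "gconnected T E S \<longleftrightarrow> S \<subseteq> topspace T \<and> \<not> gdisconnected T E S"

definition gcomponent :: "'a topology \<Rightarrow> ('a \<times> 'a) set \<Rightarrow> 'a set \<Rightarrow> 'a set \<Rightarrow> bool" where
  "gcomponent T E X C \<longleftrightarrow> C \<subseteq> X \<and> gconnected T E C \<and>
     (\<forall>C'. C \<subseteq> C' \<and> C' \<subseteq> X \<and> gconnected T E C' \<longrightarrow> C' = C)"

definition epimorphism :: "'a topology \<Rightarrow> ('a \<times> 'a) set \<Rightarrow> 'b topology \<Rightarrow> ('b \<times> 'b) set \<Rightarrow> ('a \<Rightarrow> 'b) \<Rightarrow> bool" where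
  "epimorphism T1 E1 T2 E2 f \<longleftrightarrow>
     continuous_map T1 T2 f \<and>
     (\<forall>x y. (x, y) \<in> E1 \<longrightarrow> (f x, f y) \<in> E2) \<and>
     f ` topspace T1 = topspace T2 \<and>
     (\<forall>a b. (a, b) \<in> E2 \<longrightarrow> (\<exists>x y. (x, y) \<in> E1 \<and> f x = a \<and> f y = b))"

definition confluent :: "'a topology \<Rightarrow> ('a \<times> 'a) set \<Rightarrow> 'b topology \<Rightarrow> ('b \<times> 'b) set \<Rightarrow> ('a \<Rightarrow> 'b) \<Rightarrow> bool" where
  "confluent T1 E1 T2 E2 f \<longleftrightarrow> epimorphism T1 E1 T2 E2 f \<and>
     (\<forall>Q C. gconnected T2 E2 Q \<and> gcomponent T1 E1 {x \<in> topspace T1. f x \<in> Q} C \<longrightarrow> f ` C = Q)"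

text \<open>The class \<G>: finite nonempty connected graphs; w.l.o.g. with vertices in nat
  (every finite graph is isomorphic to one of these, and all notions are isomorphism invariant).\<close>
definition in_G :: "nat set \<Rightarrow> (nat \<times> nat) set \<Rightarrow> bool" where
  "in_G V E \<longleftrightarrow> finite V \<and> V \<noteq> {} \<and> graph V E \<and> gconnected (discrete_topology V) E V"

definition mdiam :: "('a \<Rightarrow> 'a \<Rightarrow> real) \<Rightarrow> 'a set \<Rightarrow> real" where
  "mdiam d S = (if S = {} then 0 else Sup {d x y |x y. x \<in> S \<and> y \<in> S})"

text \<open>A topological graph: vertex space compact, second countable, zero-dimensional,
  here given through a compatible metric d on M (needed to speak of diameters in (3));
  edge set closed.\<close>
definition topological_graph :: "'a set \<Rightarrow> ('a \<Rightarrow> 'a \<Rightarrow> real) \<Rightarrow> ('a \<times> 'a) set \<Rightarrow> bool" where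
  "topological_graph M d E \<longleftrightarrow>
     Metric_space M d \<and>
     compact_space (Metric_space.mtopology M d) \<and>
     second_countable (Metric_space.mtopology M d) \<and>
     (\<forall>U x. openin (Metric_space.mtopology M d) U \<and> x \<in> U \<longrightarrow>
        (\<exists>W. openin (Metric_space.mtopology M d) W \<and> closedin (Metric_space.mtopology M d) W \<and> x \<in> W \<and> W \<subseteq> U)) \<and>
     graph M E \<and>
     closedin (prod_topology (Metric_space.mtopology M d) (Metric_space.mtopology M d)) E"

definition fraisse_limit_G :: "'a set \<Rightarrow> ('a \<Rightarrow> 'a \<Rightarrow> real) \<Rightarrow> ('a \<times> 'a) set \<Rightarrow> bool" where
  "fraisse_limit_G M d E \<longleftrightarrow>
     topological_graph M d E \<and>
     \<comment> \<open>(1) projective universality\<close>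
     (\<forall>VA EA. in_G VA EA \<longrightarrow>
        (\<exists>f. confluent (Metric_space.mtopology M d) E (discrete_topology VA) EA f)) \<and>
     \<comment> \<open>(2) projective extension property\<close>
     (\<forall>VA EA VB EB f g. in_G VA EA \<and> in_G VB EB \<and>
        confluent (Metric_space.mtopology M d) E (discrete_topology VA) EA f \<and>
        confluent (discrete_topology VB) EB (discrete_topology VA) EA g \<longrightarrow>
        (\<exists>h. confluent (Metric_space.mtopology M d) E (discrete_topology VB) EB h \<and>
             (\<forall>x\<in>M. f x = g (h x)))) \<and>
     \<comment> \<open>(3) fine approximations\<close>
     (\<forall>\<epsilon>>0. \<exists>VA EA f. in_G VA EA \<and>
        confluent (Metric_space.mtopology M d) E (discrete_topology VA) EA f \<and>
        (\<forall>a\<in>VA. mdiam d {x \<in> M. f x = a} < \<epsilon>))"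

definition eclass :: "'a set \<Rightarrow> ('a \<times> 'a) set \<Rightarrow> 'a \<Rightarrow> 'a set" where
  "eclass V E x = {y \<in> V. (x, y) \<in> E}"

text \<open>Quotient topology of V(G)/E(G) (E(G) is an equivalence relation): U is open iff
  its preimage under the class map is open.\<close>
definition realization_open :: "'a topology \<Rightarrow> ('a \<times> 'a) set \<Rightarrow> 'a set set \<Rightarrow> bool" where
  "realization_open T E U \<longleftrightarrow> U \<subseteq> eclass (topspace T) E ` topspace T \<and>
      openin T {x \<in> topspace T. eclass (topspace T) E x \<in> U}"

definition realization :: "'a topology \<Rightarrow> ('a \<times> 'a) set \<Rightarrow> 'a set topology" where
  "realization T E = topology (realization_open T E)"

lemma istopology_realization: "istopology (realization_open T E)"
proof -
  let ?q = "eclass (topspace T) E"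
  have 1: "realization_open T E (S \<inter> U)"
    if "realization_open T E S" "realization_open T E U" for S U
  proof -
    have "{x \<in> topspace T. ?q x \<in> S \<inter> U} =
      {x \<in> topspace T. ?q x \<in> S} \<inter> {x \<in> topspace T. ?q x \<in> U}" by auto
    moreover have "openin T ({x \<in> topspace T. ?q x \<in> S} \<inter> {x \<in> topspace T. ?q x \<in> U})"
      using that unfolding realization_open_def by (intro openin_Int) auto
    ultimately show ?thesis using that unfolding realization_open_def by auto
  qed
  have 2: "realization_open T E (\<Union>K)"
    if "\<forall>U\<in>K. realization_open T E U" for K
  proof -
    have "{x \<in> topspace T. ?q x \<in> \<Union>K} = \<Union>((\<lambda>U. {x \<in> topspace T. ?q x \<in> U}) ` K)" by auto
    moreover have "openin T (\<Union>((\<lambda>U. {x \<in> topspace T. ?q x \<in> U}) ` K))"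
      using that unfolding realization_open_def by (intro openin_Union) auto
    ultimately show ?thesis using that unfolding realization_open_def by auto
  qed
  show ?thesis unfolding istopology_def using 1 2 by auto
qed

lemma openin_realization: "openin (realization T E) U \<longleftrightarrow> realization_open T E U"
  unfolding realization_def using istopology_realization[of T E] by simp

definition hausdist_m :: "('a \<Rightarrow> 'a \<Rightarrow> real) \<Rightarrow> 'a set \<Rightarrow> 'a set \<Rightarrow> real" where
  "hausdist_m d A B = max (SUP a\<in>A. INF b\<in>B. d a b) (SUP b\<in>B. INF a\<in>A. d a b)"

definition subcontinuum :: "'a topology \<Rightarrow> 'a set \<Rightarrow> bool" where
  "subcontinuum X K \<longleftrightarrow> K \<noteq> {} \<and> compactin X K \<and> connectedin X K"

definition continuum :: "'a topology \<Rightarrow> bool" where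
  "continuum X \<longleftrightarrow> topspace X \<noteq> {} \<and> compact_space X \<and> connected_space X \<and> metrizable_space X"

text \<open>Kelley property, with respect to every metric compatible with the topology
  (the property does not depend on the choice of the metric).\<close>
definition kelley_continuum :: "'a topology \<Rightarrow> bool" where
  "kelley_continuum X \<longleftrightarrow> continuum X \<and>
     (\<forall>d. Metric_space (topspace X) d \<and> Metric_space.mtopology (topspace X) d = X \<longrightarrow>
        (\<forall>K p pn. subcontinuum X K \<and> p \<in> K \<and> range pn \<subseteq> topspace X \<and> limitin X pn p sequentially \<longrightarrow>
           (\<exists>Kn. (\<forall>n. subcontinuum X (Kn n) \<and> pn n \<in> Kn n) \<and>
                 (\<lambda>n. hausdist_m d (Kn n) K) \<longlonglongrightarrow> 0)))"

end

theory Submission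
  imports Defs
begin

lemma metrizable_compact_Hausdorff_sc:
  assumes cX: "compact_space X" and hX: "Hausdorff_space X" and sX: "second_countable X"
  shows "metrizable_space X"
proof -
  obtain \<B> where B: "countable \<B>" "\<forall>V\<in>\<B>. openin X V"
    "\<forall>U x. openin X U \<and> x \<in> U \<longrightarrow> (\<exists>V\<in>\<B>. x \<in> V \<and> V \<subseteq> U)"
    using sX unfolding second_countable_def by blast
  have nX: "normal_space X" using compact_Hausdorff_or_regular_imp_normal_space cX hX by blast
  have rX: "regular_space X" using compact_Hausdorff_imp_regular_space cX hX by blast
  define I where "I = {(B1,B2). B1 \<in> \<B> \<and> B2 \<in> \<B> \<and> X closure_of B1 \<subseteq> B2}"
  have cI: "countable I"
    by (rule countable_subset[of _ "\<B> \<times> \<B>"]) (auto simp: I_def B(1))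
  have "\<exists>g. continuous_map X (top_of_set {0..1}) g \<and> g ` (X closure_of (fst i)) \<subseteq> {0::real} \<and> g ` (topspace X - snd i) \<subseteq> {1}"
    if iI0: "i \<in> I" for i
  proof -
    obtain B1 B2 where i: "i = (B1,B2)" "B1 \<in> \<B>" "B2 \<in> \<B>" "X closure_of B1 \<subseteq> B2"
      using iI0 unfolding I_def by blast
    have "openin X B2" using B(2) i by auto
    then have "closedin X (topspace X - B2)" by auto
    moreover have "disjnt (X closure_of B1) (topspace X - B2)" using i by (auto simp: disjnt_def)
    ultimately obtain g where "continuous_map X (top_of_set {0..1}) g" "g ` (X closure_of B1) \<subseteq> {0::real}" "g ` (topspace X - B2) \<subseteq> {1}"
      using Urysohn_lemma[OF nX, of "X closure_of B1" "topspace X - B2" 0 1] by auto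
    then show ?thesis using i by auto
  qed
  then obtain g where g: "\<And>i. i \<in> I \<Longrightarrow> continuous_map X (top_of_set {0..1}) (g i) \<and> g i ` (X closure_of (fst i)) \<subseteq> {0::real} \<and> g i ` (topspace X - snd i) \<subseteq> {1}"
    by metis
  define \<Phi> where "\<Phi> u = (\<lambda>i\<in>I. g i u)" for u
  have cont: "continuous_map X (product_topology (\<lambda>_. euclideanreal) I) \<Phi>"
    unfolding continuous_map_componentwise
  proof (intro conjI ballI)
    show "\<Phi> ` topspace X \<subseteq> extensional I" by (auto simp: \<Phi>_def)
    fix k assume "k \<in> I"
    then have "continuous_map X euclideanreal (g k)"
      using g[of k] continuous_map_in_subtopology by blast
    then show "continuous_map X euclideanreal (\<lambda>x. \<Phi> x k)"
      using \<open>k \<in> I\<close> by (simp add: \<Phi>_def)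
  qed
  have inj: "inj_on \<Phi> (topspace X)"
  proof (rule inj_onI, rule ccontr)
    fix u v assume u: "u \<in> topspace X" and v: "v \<in> topspace X" and eq: "\<Phi> u = \<Phi> v" and ne: "u \<noteq> v"
    have "t1_space X" using hX Hausdorff_imp_t1_space by blast
    then obtain U where U: "openin X U" "u \<in> U" "v \<notin> U"
      using u v ne unfolding t1_space_def by blast
    obtain B2 where B2: "B2 \<in> \<B>" "u \<in> B2" "B2 \<subseteq> U" using B(3) U by blast
    have "openin X B2" using B(2) B2 by auto
    then have "closedin X (topspace X - B2)" by auto
    moreover have "u \<in> topspace X - (topspace X - B2)" using u B2 by auto
    ultimately obtain W where W: "openin X W" "u \<in> W" "disjnt (topspace X - B2) (X closure_of W)"
      using rX unfolding regular_space by blast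
    obtain B1 where B1: "B1 \<in> \<B>" "u \<in> B1" "B1 \<subseteq> W" using B(3) W by blast
    have "X closure_of B1 \<subseteq> X closure_of W" using B1 closure_of_mono by blast
    also have "\<dots> \<subseteq> B2" using W(3) closure_of_subset_topspace by (fastforce simp: disjnt_def)
    finally have iI: "(B1,B2) \<in> I" using B1 B2 unfolding I_def by auto
    have "u \<in> X closure_of B1" using B1 u closure_of_subset[of B1 X] B(2)
      by (meson openin_subset subsetD)
    then have "g (B1,B2) u = 0" using g[OF iI] by auto
    moreover have "v \<in> topspace X - B2" using v B2 U by auto
    then have "g (B1,B2) v = 1" using g[OF iI] by auto
    moreover have "g (B1,B2) u = g (B1,B2) v" using eq iI unfolding \<Phi>_def
      by (metis restrict_apply')
    ultimately show False by simp
  qed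
  have hP: "Hausdorff_space (product_topology (\<lambda>_. euclideanreal) I)"
    by (simp add: Hausdorff_space_product_topology)
  have "closed_map X (product_topology (\<lambda>_. euclideanreal) I) \<Phi>"
    using continuous_imp_closed_map[OF cont cX hP] .
  then have "embedding_map X (product_topology (\<lambda>_. euclideanreal) I) \<Phi>"
    using injective_closed_imp_embedding_map cont inj by blast
  then have hom: "X homeomorphic_space (subtopology (product_topology (\<lambda>_. euclideanreal) I) (\<Phi> ` topspace X))"
    by (rule embedding_map_imp_homeomorphic_space)
  have "metrizable_space (product_topology (\<lambda>_. euclideanreal) I)"
  proof (rule metrizable_topology_D)
    show "topspace (product_topology (\<lambda>_. euclideanreal) I) \<noteq> {}" by (simp add: PiE_eq_empty_iff)
    show "countable {i \<in> I. \<nexists>a. topspace euclideanreal \<subseteq> {a}}"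
      by (rule countable_subset[OF _ cI]) auto
    show "\<And>i. i \<in> I \<Longrightarrow> metrizable_space euclideanreal" by (simp add: metrizable_space_euclidean)
  qed
  then show ?thesis
    using hom homeomorphic_metrizable_space metrizable_space_subtopology by blast
qed

lemma gconnected_split:
  assumes "gconnected T E S" "closedin (subtopology T S) P" "closedin (subtopology T S) R"
    "P \<union> R = S" "\<forall>p\<in>P. \<forall>r\<in>R. (p, r) \<notin> E"
  shows "P = {} \<or> R = {}"
  using assms unfolding gconnected_def gdisconnected_def by blast

lemma gconnected_Union_point:
  assumes refl: "\<forall>x\<in>topspace T. (x,x) \<in> E"
    and S: "\<forall>S\<in>\<S>. gconnected T E S \<and> x \<in> S"
  shows "gconnected T E (\<Union>\<S>)"
  unfolding gconnected_def
proof
  show "\<Union>\<S> \<subseteq> topspace T" using S unfolding gconnected_def by blast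
  show "\<not> gdisconnected T E (\<Union> \<S>)"
  proof
    assume "gdisconnected T E (\<Union> \<S>)"
    then obtain P R where PR: "P \<noteq> {}" "R \<noteq> {}" "closedin (subtopology T (\<Union>\<S>)) P"
      "closedin (subtopology T (\<Union>\<S>)) R" "P \<union> R = \<Union>\<S>" "\<forall>p\<in>P. \<forall>r\<in>R. (p, r) \<notin> E"
      unfolding gdisconnected_def by blast
    obtain FP where FP: "closedin T FP" "P = FP \<inter> \<Union>\<S>" using PR(3) closedin_subtopology by metis
    obtain FR where FR: "closedin T FR" "R = FR \<inter> \<Union>\<S>" using PR(4) closedin_subtopology by metis
    have one: "S \<inter> FP = {} \<or> S \<inter> FR = {}" if "S \<in> \<S>" for S
    proof (rule gconnected_split[of T E S])
      show "gconnected T E S" using S that by blast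
      show "closedin (subtopology T S) (S \<inter> FP)" using FP(1) closedin_subtopology by blast
      show "closedin (subtopology T S) (S \<inter> FR)" using FR(1) closedin_subtopology by blast
      show "S \<inter> FP \<union> S \<inter> FR = S" using PR(5) FP(2) FR(2) that by blast
      show "\<forall>p\<in>S \<inter> FP. \<forall>r\<in>S \<inter> FR. (p, r) \<notin> E" using PR(6) FP(2) FR(2) that by blast
    qed
    have "\<S> \<noteq> {}" using PR(1) FP(2) by auto
    then obtain S0 where "S0 \<in> \<S>" by blast
    then have "x \<in> P \<union> R" using PR(5) S by blast
    then show False
    proof
      assume "x \<in> P"
      then have "x \<in> FP" using FP by auto
      then have "\<forall>S\<in>\<S>. S \<inter> FR = {}" using one S by blast
      then show False using PR(2) FR(2) by blast
    next
      assume "x \<in> R"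
      then have "x \<in> FR" using FR by auto
      then have "\<forall>S\<in>\<S>. S \<inter> FP = {}" using one S by blast
      then show False using PR(1) FP(2) by blast
    qed
  qed
qed

lemma gconnected_closure:
  assumes refl: "\<forall>x\<in>topspace T. (x,x) \<in> E"
    and S: "gconnected T E S"
  shows "gconnected T E (T closure_of S)"
  unfolding gconnected_def
proof
  show "T closure_of S \<subseteq> topspace T" by (rule closure_of_subset_topspace)
  show "\<not> gdisconnected T E (T closure_of S)"
  proof
    assume "gdisconnected T E (T closure_of S)"
    then obtain P R where PR: "P \<noteq> {}" "R \<noteq> {}" "closedin (subtopology T (T closure_of S)) P"
      "closedin (subtopology T (T closure_of S)) R" "P \<union> R = T closure_of S" "\<forall>p\<in>P. \<forall>r\<in>R. (p, r) \<notin> E"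
      unfolding gdisconnected_def by blast
    have cP: "closedin T P" using closedin_trans_full[OF PR(3) closedin_closure_of] .
    have cR: "closedin T R" using closedin_trans_full[OF PR(4) closedin_closure_of] .
    have Ssub: "S \<subseteq> topspace T" using S unfolding gconnected_def by blast
    have SC: "S \<subseteq> T closure_of S" using closure_of_subset[OF Ssub] .
    have "S \<inter> P = {} \<or> S \<inter> R = {}"
    proof (rule gconnected_split[OF S])
      show "closedin (subtopology T S) (S \<inter> P)" using cP closedin_subtopology by blast
      show "closedin (subtopology T S) (S \<inter> R)" using cR closedin_subtopology by blast
      show "S \<inter> P \<union> S \<inter> R = S" using PR(5) SC by blast
      show "\<forall>p\<in>S \<inter> P. \<forall>r\<in>S \<inter> R. (p, r) \<notin> E" using PR(6) by blast
    qed
    then show False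
    proof
      assume "S \<inter> P = {}"
      then have "S \<subseteq> R" using PR(5) SC by blast
      then have "T closure_of S \<subseteq> R" using cR closure_of_minimal by blast
      then obtain p where "p \<in> P" "p \<in> R" using PR(1) PR(5) by blast
      moreover have "p \<in> topspace T" using \<open>p \<in> P\<close> cP closedin_subset by blast
      ultimately show False using PR(6) refl by blast
    next
      assume "S \<inter> R = {}"
      then have "S \<subseteq> P" using PR(5) SC by blast
      then have "T closure_of S \<subseteq> P" using cP closure_of_minimal by blast
      then obtain p where "p \<in> P" "p \<in> R" using PR(2) PR(5) by blast
      moreover have "p \<in> topspace T" using \<open>p \<in> P\<close> cP closedin_subset by blast
      ultimately show False using PR(6) refl by blast
    qed
  qed
qed

lemma gconnected_singleton:
  assumes "x \<in> topspace T" "(x,x) \<in> E"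
  shows "gconnected T E {x}"
  unfolding gconnected_def gdisconnected_def
proof (intro conjI notI)
  show "{x} \<subseteq> topspace T" using assms by simp
  assume "\<exists>P Q. P \<noteq> {} \<and> Q \<noteq> {} \<and> closedin (subtopology T {x}) P \<and> closedin (subtopology T {x}) Q \<and>
            P \<union> Q = {x} \<and> (\<forall>p\<in>P. \<forall>q\<in>Q. (p, q) \<notin> E)"
  then obtain P Q where "P \<noteq> {}" "Q \<noteq> {}" "P \<union> Q = {x}" "\<forall>p\<in>P. \<forall>q\<in>Q. (p, q) \<notin> E" by blast
  then have "x \<in> P" "x \<in> Q" by auto
  then show False using assms \<open>\<forall>p\<in>P. \<forall>q\<in>Q. (p, q) \<notin> E\<close> by blast
qed

lemma gcomponent_exists:
  assumes refl: "\<forall>x\<in>topspace T. (x,x) \<in> E"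
    and W: "closedin T W" and x0: "x0 \<in> W"
  defines "C \<equiv> \<Union>{S. S \<subseteq> W \<and> x0 \<in> S \<and> gconnected T E S}"
  shows "gcomponent T E W C" "x0 \<in> C" "closedin T C"
proof -
  have WT: "W \<subseteq> topspace T" using closedin_subset[OF W] .
  have x0T: "x0 \<in> topspace T" using WT x0 by blast
  have single: "gconnected T E {x0}" using gconnected_singleton[OF x0T] refl x0T by blast
  have "{x0} \<in> {S. S \<subseteq> W \<and> x0 \<in> S \<and> gconnected T E S}" using single x0 by simp
  then have x0C: "x0 \<in> C" unfolding C_def by (rule UnionI) simp
  have CW: "C \<subseteq> W" unfolding C_def by (rule Union_least) simp
  have "\<forall>S\<in>{S. S \<subseteq> W \<and> x0 \<in> S \<and> gconnected T E S}. gconnected T E S \<and> x0 \<in> S" by simp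
  then have Cc: "gconnected T E C" unfolding C_def by (rule gconnected_Union_point[OF refl])
  have max: "C' \<subseteq> C" if "C' \<subseteq> W" "x0 \<in> C'" "gconnected T E C'" for C'
  proof -
    have "C' \<in> {S. S \<subseteq> W \<and> x0 \<in> S \<and> gconnected T E S}" using that by simp
    then show ?thesis unfolding C_def by (rule Union_upper)
  qed
  have "\<forall>C'. C \<subseteq> C' \<and> C' \<subseteq> W \<and> gconnected T E C' \<longrightarrow> C' = C"
  proof (intro allI impI)
    fix C' assume H: "C \<subseteq> C' \<and> C' \<subseteq> W \<and> gconnected T E C'"
    then have "x0 \<in> C'" using x0C by blast
    then have "C' \<subseteq> C" using max H by simp
    then show "C' = C" using H by simp
  qed
  then show "gcomponent T E W C" unfolding gcomponent_def using CW Cc by simp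
  show "x0 \<in> C" by (rule x0C)
  have clc: "gconnected T E (T closure_of C)" by (rule gconnected_closure[OF refl Cc])
  have CT: "C \<subseteq> topspace T" using CW WT by simp
  have sub1: "C \<subseteq> T closure_of C" using closure_of_subset[OF CT] .
  have "T closure_of C \<subseteq> W" using closure_of_minimal[OF CW W] .
  moreover have "x0 \<in> T closure_of C" using x0C sub1 by blast
  ultimately have "T closure_of C \<subseteq> C" using max clc by simp
  then have "T closure_of C = C" using sub1 by simp
  then show "closedin T C" by (metis closedin_closure_of)
qed

lemma gconnected_image_discrete:
  assumes f: "continuous_map T (discrete_topology V) f"
    and hom: "\<forall>x y. (x,y) \<in> E \<longrightarrow> (f x, f y) \<in> EA"
    and S: "gconnected T E S"
  shows "gconnected (discrete_topology V) EA (f ` S)"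
  unfolding gconnected_def
proof
  have Ssub: "S \<subseteq> topspace T" using S unfolding gconnected_def by blast
  have "f ` topspace T \<subseteq> topspace (discrete_topology V)"
    by (rule continuous_map_image_subset_topspace[OF f])
  then show fS: "f ` S \<subseteq> topspace (discrete_topology V)" using Ssub by blast
  show "\<not> gdisconnected (discrete_topology V) EA (f ` S)"
  proof
    assume "gdisconnected (discrete_topology V) EA (f ` S)"
    then obtain P R where PR: "P \<noteq> {}" "R \<noteq> {}" "P \<union> R = f ` S" "\<forall>p\<in>P. \<forall>r\<in>R. (p, r) \<notin> EA"
      unfolding gdisconnected_def by blast
    have cl: "closedin (subtopology T S) {x\<in>S. f x \<in> Z}" if Zs: "Z \<subseteq> f ` S" for Z
    proof -
      have "Z \<subseteq> V" using Zs fS by simp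
      then have "closedin (discrete_topology V) Z" by simp
      then have "closedin T {x \<in> topspace T. f x \<in> Z}" by (rule closedin_continuous_map_preimage[OF f])
      moreover have "{x\<in>S. f x \<in> Z} = {x \<in> topspace T. f x \<in> Z} \<inter> S" using Ssub by blast
      ultimately show ?thesis unfolding closedin_subtopology by blast
    qed
    have P1: "P \<subseteq> f ` S" and R1: "R \<subseteq> f ` S" using PR(3) by auto
    have noedge: "\<forall>p\<in>{x\<in>S. f x \<in> P}. \<forall>q\<in>{x\<in>S. f x \<in> R}. (p, q) \<notin> E"
    proof (intro ballI notI)
      fix p q assume p: "p \<in> {x\<in>S. f x \<in> P}" and q: "q \<in> {x\<in>S. f x \<in> R}" and pq: "(p,q) \<in> E"
      have "(f p, f q) \<in> EA" using hom pq by blast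
      moreover have "f p \<in> P" "f q \<in> R" using p q by auto
      ultimately show False using PR(4) by blast
    qed
    have "gdisconnected T E S" unfolding gdisconnected_def
    proof (intro exI conjI)
      show "{x\<in>S. f x \<in> P} \<noteq> {}" using PR(1) P1 by blast
      show "{x\<in>S. f x \<in> R} \<noteq> {}" using PR(2) R1 by blast
      show "closedin (subtopology T S) {x\<in>S. f x \<in> P}" by (rule cl[OF P1])
      show "closedin (subtopology T S) {x\<in>S. f x \<in> R}" by (rule cl[OF R1])
      show "{x\<in>S. f x \<in> P} \<union> {x\<in>S. f x \<in> R} = S" using PR(3) by blast
      show "\<forall>p\<in>{x\<in>S. f x \<in> P}. \<forall>q\<in>{x\<in>S. f x \<in> R}. (p, q) \<notin> E" by (rule noedge)
    qed
    then show False using S unfolding gconnected_def by blast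
  qed
qed

lemma gconnected_image_connectedin:
  assumes q: "continuous_map T X q"
    and hom: "\<forall>x y. (x,y) \<in> E \<longrightarrow> q x = q y"
    and S: "gconnected T E S"
  shows "connectedin X (q ` S)"
  unfolding connectedin_closedin
proof
  have Ssub: "S \<subseteq> topspace T" using S unfolding gconnected_def by blast
  have "q ` topspace T \<subseteq> topspace X" by (rule continuous_map_image_subset_topspace[OF q])
  then show qS: "q ` S \<subseteq> topspace X" using Ssub by blast
  show "\<not> (\<exists>E1 E2. closedin X E1 \<and> closedin X E2 \<and> q ` S \<subseteq> E1 \<union> E2 \<and>
      E1 \<inter> E2 \<inter> q ` S = {} \<and> E1 \<inter> q ` S \<noteq> {} \<and> E2 \<inter> q ` S \<noteq> {})"
  proof
    assume "\<exists>E1 E2. closedin X E1 \<and> closedin X E2 \<and> q ` S \<subseteq> E1 \<union> E2 \<and>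
      E1 \<inter> E2 \<inter> q ` S = {} \<and> E1 \<inter> q ` S \<noteq> {} \<and> E2 \<inter> q ` S \<noteq> {}"
    then obtain E1 E2 where EE: "closedin X E1" "closedin X E2" "q ` S \<subseteq> E1 \<union> E2"
      "E1 \<inter> E2 \<inter> q ` S = {}" "E1 \<inter> q ` S \<noteq> {}" "E2 \<inter> q ` S \<noteq> {}" by blast
    have cl: "closedin (subtopology T S) {x\<in>S. q x \<in> Z}" if Zc: "closedin X Z" for Z
    proof -
      have "closedin T {x \<in> topspace T. q x \<in> Z}" by (rule closedin_continuous_map_preimage[OF q Zc])
      moreover have "{x\<in>S. q x \<in> Z} = {x \<in> topspace T. q x \<in> Z} \<inter> S" using Ssub by blast
      ultimately show ?thesis unfolding closedin_subtopology by blast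
    qed
    have noedge: "\<forall>p\<in>{x\<in>S. q x \<in> E1}. \<forall>r\<in>{x\<in>S. q x \<in> E2}. (p, r) \<notin> E"
    proof (intro ballI notI)
      fix p r assume p: "p \<in> {x\<in>S. q x \<in> E1}" and r: "r \<in> {x\<in>S. q x \<in> E2}" and "(p,r) \<in> E"
      then have "q p = q r" using hom by blast
      then have "q p \<in> E1 \<inter> E2 \<inter> q ` S" using p r by auto
      then show False using EE(4) by blast
    qed
    have "gdisconnected T E S" unfolding gdisconnected_def
    proof (intro exI conjI)
      show "{x\<in>S. q x \<in> E1} \<noteq> {}" using EE(5) by blast
      show "{x\<in>S. q x \<in> E2} \<noteq> {}" using EE(6) by blast
      show "closedin (subtopology T S) {x\<in>S. q x \<in> E1}" by (rule cl[OF EE(1)])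
      show "closedin (subtopology T S) {x\<in>S. q x \<in> E2}" by (rule cl[OF EE(2)])
      show "{x\<in>S. q x \<in> E1} \<union> {x\<in>S. q x \<in> E2} = S" using EE(3) by blast
      show "\<forall>p\<in>{x\<in>S. q x \<in> E1}. \<forall>r\<in>{x\<in>S. q x \<in> E2}. (p, r) \<notin> E" by (rule noedge)
    qed
    then show False using S unfolding gconnected_def by blast
  qed
qed

lemma (in Metric_space) lebesgue_number:
  assumes cpt: "compact_space mtopology" and opn: "\<forall>U\<in>\<U>. openin mtopology U" and cov: "M \<subseteq> \<Union>\<U>"
  shows "\<exists>l>0. \<forall>S. S \<subseteq> M \<and> S \<noteq> {} \<and> (\<forall>x\<in>S. \<forall>y\<in>S. d x y < l) \<longrightarrow> (\<exists>U\<in>\<U>. S \<subseteq> U)"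
proof (cases "M = {}")
  case True
  then show ?thesis by (intro exI[of _ 1]) auto
next
  case False
  have "\<exists>r>0. \<exists>U\<in>\<U>. mball x (2*r) \<subseteq> U" if xM0: "x \<in> M" for x
  proof -
    obtain U where U: "U \<in> \<U>" "x \<in> U" using cov xM0 by blast
    then obtain r where "r > 0" "mball x r \<subseteq> U" using opn openin_mtopology by meson
    then show ?thesis using U by (intro exI[of _ "r/2"]) auto
  qed
  then obtain r where r: "\<And>x. x \<in> M \<Longrightarrow> r x > 0 \<and> (\<exists>U\<in>\<U>. mball x (2 * r x) \<subseteq> U)" by metis
  have "compactin mtopology M" using cpt unfolding compact_space_def by simp
  moreover have "\<forall>V\<in>(\<lambda>x. mball x (r x)) ` M. openin mtopology V" by auto
  moreover have "M \<subseteq> \<Union>((\<lambda>x. mball x (r x)) ` M)"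
  proof
    fix x assume "x \<in> M" then show "x \<in> \<Union>((\<lambda>x. mball x (r x)) ` M)" using r[of x] by force
  qed
  ultimately obtain \<V> where V: "finite \<V>" "\<V> \<subseteq> (\<lambda>x. mball x (r x)) ` M" "M \<subseteq> \<Union>\<V>"
    unfolding compactin_def by meson
  then obtain F where F: "F \<subseteq> M" "finite F" "\<V> = (\<lambda>x. mball x (r x)) ` F"
    by (meson finite_subset_image)
  have Fne: "F \<noteq> {}" using False V(3) F(3) by auto
  define l where "l = Min (r ` F)"
  have lpos: "l > 0" unfolding l_def using F Fne r by (subst Min_gr_iff) auto
  have lle: "l \<le> r x" if "x \<in> F" for x unfolding l_def using F that by auto
  show ?thesis
  proof (intro exI[of _ l] conjI allI impI lpos)
    fix S assume S: "S \<subseteq> M \<and> S \<noteq> {} \<and> (\<forall>x\<in>S. \<forall>y\<in>S. d x y < l)"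
    then obtain s where s: "s \<in> S" by blast
    then have "s \<in> M" using S by blast
    then obtain x where x: "x \<in> F" "s \<in> mball x (r x)" using V(3) F(3) by blast
    obtain U where U: "U \<in> \<U>" "mball x (2 * r x) \<subseteq> U" using r[of x] x F by blast
    have "S \<subseteq> mball x (2 * r x)"
    proof
      fix y assume y: "y \<in> S"
      have xM: "x \<in> M" using x F by blast
      have yM: "y \<in> M" using y S by blast
      have "d x y \<le> d x s + d s y" using triangle xM yM \<open>s \<in> M\<close> by blast
      also have "\<dots> < r x + l" using x S s y by (intro add_strict_mono) auto
      also have "\<dots> \<le> 2 * r x" using lle[OF x(1)] by simp
      finally show "y \<in> mball x (2 * r x)" using xM yM by simp
    qed
    then show "\<exists>U\<in>\<U>. S \<subseteq> U" using U by blast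
  qed
qed

lemma (in Metric_space) mdiam_ge:
  assumes cpt: "compact_space mtopology" and S: "S \<subseteq> M" "x \<in> S" "y \<in> S"
  shows "d x y \<le> mdiam d S"
proof -
  have "mbounded M" using cpt compactin_imp_mbounded unfolding compact_space_def by simp
  then obtain c B where cB: "M \<subseteq> mcball c B" unfolding mbounded_def by blast
  have bd: "bdd_above {d x y |x y. x \<in> S \<and> y \<in> S}"
  proof (rule bdd_aboveI[of _ "2*B"])
    fix z assume "z \<in> {d x y |x y. x \<in> S \<and> y \<in> S}"
    then obtain u v where z: "z = d u v" "u \<in> S" "v \<in> S" by blast
    then have "u \<in> M" "v \<in> M" "c \<in> M" using S cB by auto
    moreover have "d c u \<le> B" "d c v \<le> B" using z S cB by auto
    ultimately show "z \<le> 2*B" using z triangle[of u c v] commute[of u c] by auto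
  qed
  have "d x y \<in> {d x y |x y. x \<in> S \<and> y \<in> S}" using S by blast
  then have "d x y \<le> Sup {d x y |x y. x \<in> S \<and> y \<in> S}" using bd by (rule cSup_upper)
  then show ?thesis unfolding mdiam_def using S by auto
qed

locale qsetup = Metric_space M d for M :: "'a set" and d +
  fixes E :: "('a \<times> 'a) set"
  assumes cpt: "compact_space mtopology"
    and Eclosed: "closedin (prod_topology mtopology mtopology) E"
    and Esub: "E \<subseteq> M \<times> M"
    and Erefl: "\<And>x. x \<in> M \<Longrightarrow> (x,x) \<in> E"
    and Esym: "\<And>x y. (x,y) \<in> E \<Longrightarrow> (y,x) \<in> E"
    and Etrans: "\<And>x y z. (x,y) \<in> E \<Longrightarrow> (y,z) \<in> E \<Longrightarrow> (x,z) \<in> E"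
begin

abbreviation "q \<equiv> eclass M E"
abbreviation "X \<equiv> realization mtopology E"

lemma q_eq: "x \<in> M \<Longrightarrow> y \<in> M \<Longrightarrow> q x = q y \<longleftrightarrow> (x,y) \<in> E"
proof
  assume xy: "x \<in> M" "y \<in> M" and "q x = q y"
  then have "y \<in> q x" using Erefl[of y] unfolding eclass_def by auto
  then show "(x,y) \<in> E" unfolding eclass_def by auto
next
  assume xy: "x \<in> M" "y \<in> M" and "(x,y) \<in> E"
  then show "q x = q y" unfolding eclass_def using Esym Etrans by blast
qed

lemma q_edge: "(x,y) \<in> E \<Longrightarrow> q x = q y"
  using q_eq Esub by blast

lemma openX: "openin X U \<longleftrightarrow> U \<subseteq> q ` M \<and> openin mtopology {x\<in>M. q x \<in> U}"
  unfolding openin_realization realization_open_def by simp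

lemma topX: "topspace X = q ` M"
proof
  show "topspace X \<subseteq> q ` M"
    by (metis openX openin_topspace)
  have "{x\<in>M. q x \<in> q ` M} = M" by auto
  then have "openin X (q ` M)" unfolding openX by (metis openin_topspace topspace_mtopology order_refl)
  then show "q ` M \<subseteq> topspace X" using openin_subset by blast
qed

lemma contq: "continuous_map mtopology X q"
  unfolding continuous_map_def topX openX by auto

lemma closedX: "closedin X F \<longleftrightarrow> F \<subseteq> q ` M \<and> closedin mtopology {x\<in>M. q x \<in> F}"
proof -
  have eq: "{x\<in>M. q x \<in> q ` M - F} = M - {x\<in>M. q x \<in> F}" by auto
  show ?thesis
    unfolding closedin_def topX openX eq by auto
qed

lemma sat_eq: "C \<subseteq> M \<Longrightarrow> {x\<in>M. q x \<in> q ` C} = snd ` (E \<inter> (C \<times> M))"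
proof -
  assume C: "C \<subseteq> M"
  show ?thesis
  proof
    show "{x\<in>M. q x \<in> q ` C} \<subseteq> snd ` (E \<inter> (C \<times> M))"
    proof
      fix x assume "x \<in> {x\<in>M. q x \<in> q ` C}"
      then obtain c where "c \<in> C" "x \<in> M" "q x = q c" by blast
      then have "(c,x) \<in> E" using q_eq C by blast
      then show "x \<in> snd ` (E \<inter> (C \<times> M))" using \<open>c \<in> C\<close> \<open>x \<in> M\<close> by force
    qed
    show "snd ` (E \<inter> (C \<times> M)) \<subseteq> {x\<in>M. q x \<in> q ` C}"
    proof
      fix x assume "x \<in> snd ` (E \<inter> (C \<times> M))"
      then obtain c where "(c,x) \<in> E" "c \<in> C" "x \<in> M" by force
      then have "q x = q c" using q_edge by metis
      then show "x \<in> {x\<in>M. q x \<in> q ` C}" using \<open>c \<in> C\<close> \<open>x \<in> M\<close> by force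
    qed
  qed
qed

lemma closedq: "closed_map mtopology X q"
  unfolding closed_map_def
proof (intro allI impI)
  fix C assume C: "closedin mtopology C"
  then have CM: "C \<subseteq> M" using closedin_subset by force
  have cp: "compact_space (prod_topology mtopology mtopology)"
    using cpt compact_space_prod_topology by blast
  have "closedin (prod_topology mtopology mtopology) (E \<inter> (C \<times> M))"
  proof (rule closedin_Int[OF Eclosed])
    show "closedin (prod_topology mtopology mtopology) (C \<times> M)"
      using C closedin_topspace[of mtopology] by (simp add: closedin_prod_Times_iff)
  qed
  then have "compactin (prod_topology mtopology mtopology) (E \<inter> (C \<times> M))"
    using closedin_compact_space cp by blast
  then have "compactin mtopology (snd ` (E \<inter> (C \<times> M)))"
    using image_compactin continuous_map_snd by blast
  then have "closedin mtopology (snd ` (E \<inter> (C \<times> M)))"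
    using compactin_imp_closedin Hausdorff_space_mtopology by blast
  then show "closedin X (q ` C)" unfolding closedX using sat_eq[OF CM] CM by auto
qed

lemma X_normal_Hausdorff: "normal_space X \<and> Hausdorff_space X"
  by (rule normal_Hausdorff_space_closed_continuous_map_image[OF _ Hausdorff_space_mtopology closedq contq])
     (auto simp: topX metrizable_imp_normal_space metrizable_space_mtopology)

lemma X_compact: "compact_space X"
proof -
  have "compactin mtopology M" using cpt unfolding compact_space_def by simp
  then have "compactin X (q ` M)" by (rule image_compactin[OF _ contq])
  then show ?thesis unfolding compact_space_def topX .
qed

lemma class_compact:
  assumes "u \<in> topspace X"
  shows "compactin mtopology {x\<in>M. q x = u}"
proof -
  have "t1_space X" using X_normal_Hausdorff Hausdorff_imp_t1_space by blast
  then have "closedin X {u}" by (rule closedin_t1_singleton[OF _ assms])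
  then have "closedin mtopology {x \<in> topspace mtopology. q x \<in> {u}}"
    by (rule closedin_continuous_map_preimage[OF contq])
  moreover have "{x \<in> topspace mtopology. q x \<in> {u}} = {x\<in>M. q x = u}" by auto
  ultimately have "closedin mtopology {x\<in>M. q x = u}" by simp
  then show ?thesis by (rule closedin_compact_space[OF cpt])
qed

lemma X_second_countable:
  assumes "second_countable mtopology"
  shows "second_countable X"
proof -
  obtain \<B> where B: "countable \<B>" "\<forall>V\<in>\<B>. openin mtopology V"
    "\<forall>U x. openin mtopology U \<and> x \<in> U \<longrightarrow> (\<exists>V\<in>\<B>. x \<in> V \<and> V \<subseteq> U)"
    using assms unfolding second_countable_def by blast
  define \<F> where "\<F> = Union ` {A. finite A \<and> A \<subseteq> \<B>}"
  have cF: "countable \<F>" unfolding \<F>_def using countable_Collect_finite_subset B(1) by blast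
  define \<B>X where "\<B>X = (\<lambda>U. topspace X - q ` (M - U)) ` \<F>"
  show ?thesis unfolding second_countable_def
  proof (intro exI conjI)
    show "countable \<B>X" unfolding \<B>X_def using cF by blast
    show "\<forall>V\<in>\<B>X. openin X V"
    proof
      fix V assume "V \<in> \<B>X"
      then obtain U where U: "U \<in> \<F>" "V = topspace X - q ` (M - U)" unfolding \<B>X_def by blast
      have "openin mtopology U" using U(1) B(2) unfolding \<F>_def by blast
      then have "closedin mtopology (M - U)" by (metis closedin_diff closedin_topspace topspace_mtopology)
      then have "closedin X (q ` (M - U))" using closedq unfolding closed_map_def by blast
      then show "openin X V" using U(2) by blast
    qed
    show "\<forall>W u. openin X W \<and> u \<in> W \<longrightarrow> (\<exists>V\<in>\<B>X. u \<in> V \<and> V \<subseteq> W)"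
    proof (intro allI impI)
      fix W u assume Wu: "openin X W \<and> u \<in> W"
      then have uX: "u \<in> topspace X" using openin_subset by blast
      define W' where "W' = {x\<in>M. q x \<in> W}"
      have W'o: "openin mtopology W'" using Wu unfolding openX W'_def by blast
      define Cu where "Cu = {x\<in>M. q x = u}"
      have Cuc: "compactin mtopology Cu" unfolding Cu_def using class_compact uX .
      have CuW: "Cu \<subseteq> W'" unfolding Cu_def W'_def using Wu by auto
      have "\<forall>V\<in>{V\<in>\<B>. V \<subseteq> W'}. openin mtopology V" using B(2) by blast
      moreover have "Cu \<subseteq> \<Union>{V\<in>\<B>. V \<subseteq> W'}"
      proof
        fix x assume "x \<in> Cu"
        then have "x \<in> W'" using CuW by blast
        then obtain V where "V \<in> \<B>" "x \<in> V" "V \<subseteq> W'" using B(3) W'o by blast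
        then show "x \<in> \<Union>{V\<in>\<B>. V \<subseteq> W'}" by blast
      qed
      ultimately obtain \<V> where V: "finite \<V>" "\<V> \<subseteq> {V\<in>\<B>. V \<subseteq> W'}" "Cu \<subseteq> \<Union>\<V>"
        using Cuc unfolding compactin_def by meson
      define U where "U = \<Union>\<V>"
      have UF: "U \<in> \<F>" unfolding U_def \<F>_def using V by blast
      have UW: "U \<subseteq> W'" unfolding U_def using V by blast
      show "\<exists>V\<in>\<B>X. u \<in> V \<and> V \<subseteq> W"
      proof (intro bexI conjI)
        show "topspace X - q ` (M - U) \<in> \<B>X" unfolding \<B>X_def using UF by blast
        show "u \<in> topspace X - q ` (M - U)"
        proof
          show "u \<in> topspace X" by (rule uX)
          show "u \<notin> q ` (M - U)"
          proof
            assume "u \<in> q ` (M - U)"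
            then obtain y where "y \<in> M" "y \<notin> U" "q y = u" by blast
            then have "y \<in> Cu" unfolding Cu_def by blast
            then show False using V(3) \<open>y \<notin> U\<close> unfolding U_def by blast
          qed
        qed
        show "topspace X - q ` (M - U) \<subseteq> W"
        proof
          fix w assume w: "w \<in> topspace X - q ` (M - U)"
          then obtain y where y: "y \<in> M" "q y = w" unfolding topX by blast
          show "w \<in> W"
          proof (rule ccontr)
            assume "w \<notin> W"
            then have "y \<notin> U" using UW y unfolding W'_def by blast
            then show False using w y by blast
          qed
        qed
      qed
    qed
  qed
qed

lemma X_metrizable:
  assumes "second_countable mtopology"
  shows "metrizable_space X"
  using metrizable_compact_Hausdorff_sc X_compact X_normal_Hausdorff X_second_countable[OF assms] by blast

end

definition Vb :: "nat \<Rightarrow> nat" where "Vb u = 2*u"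
definition Hb :: "nat \<Rightarrow> nat \<Rightarrow> nat" where "Hb u v = 2 * prod_encode (u,v) + 1"
definition gB :: "nat \<Rightarrow> nat" where
  "gB n = (if even n then n div 2 else fst (prod_decode (n div 2)))"

definition VB :: "nat set \<Rightarrow> (nat \<times> nat) set \<Rightarrow> nat set" where
  "VB VA EA = Vb ` VA \<union> {Hb u v |u v. (u,v) \<in> EA \<and> u \<noteq> v}"

definition EB :: "nat set \<Rightarrow> (nat \<times> nat) set \<Rightarrow> (nat \<times> nat) set" where
  "EB VA EA = Id_on (VB VA EA) \<union> {(Vb u, Hb u v) |u v. (u,v) \<in> EA \<and> u \<noteq> v}
     \<union> {(Hb u v, Vb u) |u v. (u,v) \<in> EA \<and> u \<noteq> v} \<union> {(Hb u v, Hb v u) |u v. (u,v) \<in> EA \<and> u \<noteq> v}"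

lemma gB_Vb [simp]: "gB (Vb u) = u" unfolding gB_def Vb_def by simp
lemma gB_Hb [simp]: "gB (Hb u v) = u" unfolding gB_def Hb_def by simp
lemma Vb_Hb [simp]: "Vb u \<noteq> Hb u' v'" "Hb u' v' \<noteq> Vb u" unfolding Vb_def Hb_def by presburger+
lemma Vb_inj [simp]: "Vb u = Vb u' \<longleftrightarrow> u = u'" unfolding Vb_def by simp
lemma Hb_inj [simp]: "Hb u v = Hb u' v' \<longleftrightarrow> u = u' \<and> v = v'"
  unfolding Hb_def using prod_encode_eq by auto

lemma EB_cases:
  assumes "(n,m) \<in> EB VA EA"
  obtains "n = m" "n \<in> VB VA EA"
  | u v where "n = Vb u" "m = Hb u v" "(u,v) \<in> EA" "u \<noteq> v"
  | u v where "n = Hb u v" "m = Vb u" "(u,v) \<in> EA" "u \<noteq> v"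
  | u v where "n = Hb u v" "m = Hb v u" "(u,v) \<in> EA" "u \<noteq> v"
  using assms unfolding EB_def by blast

lemma EB_diff:
  assumes "(n,m) \<in> EB VA EA" "gB n \<noteq> gB m"
  shows "n = Hb (gB n) (gB m)"
  using assms(1) by (cases rule: EB_cases) (use assms(2) in auto)

lemma EB_sym:
  assumes "graph VA EA" "(n,m) \<in> EB VA EA"
  shows "(m,n) \<in> EB VA EA"
proof -
  have s: "\<And>x y. (x,y) \<in> EA \<Longrightarrow> (y,x) \<in> EA" using assms(1) unfolding graph_def by blast
  from assms(2) show ?thesis
  proof (cases rule: EB_cases)
    case 1 then show ?thesis unfolding EB_def by auto
  next
    case (2 u v) then show ?thesis unfolding EB_def by blast
  next
    case (3 u v) then show ?thesis unfolding EB_def by blast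
  next
    case (4 u v) then have "(v,u) \<in> EA" "v \<noteq> u" using s by auto
    then show ?thesis using 4 unfolding EB_def by blast
  qed
qed

lemma VB_gB: "graph VA EA \<Longrightarrow> n \<in> VB VA EA \<Longrightarrow> gB n \<in> VA"
  unfolding VB_def graph_def by auto

lemma EB_sub:
  assumes "graph VA EA" "(n,m) \<in> EB VA EA"
  shows "n \<in> VB VA EA \<and> m \<in> VB VA EA"
proof -
  have s: "\<And>x y. (x,y) \<in> EA \<Longrightarrow> (y,x) \<in> EA" and sub: "EA \<subseteq> VA \<times> VA"
    using assms(1) unfolding graph_def by blast+
  from assms(2) show ?thesis
  proof (cases rule: EB_cases)
    case 1 then show ?thesis by auto
  next
    case (2 u v) then show ?thesis using sub unfolding VB_def by blast
  next
    case (3 u v) then show ?thesis using sub unfolding VB_def by blast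
  next
    case (4 u v) then have "(v,u) \<in> EA" "v \<noteq> u" using s by auto
    then show ?thesis using 4 unfolding VB_def by blast
  qed
qed

lemma pre_connected:
  assumes G: "graph VA EA" and Q: "gconnected (discrete_topology VA) EA Q"
  shows "gconnected (discrete_topology (VB VA EA)) (EB VA EA) {n \<in> VB VA EA. gB n \<in> Q}"
  unfolding gconnected_def
proof (intro conjI notI)
  let ?V = "VB VA EA" and ?E = "EB VA EA"
  define Pre where "Pre = {n \<in> ?V. gB n \<in> Q}"
  show "{n \<in> ?V. gB n \<in> Q} \<subseteq> topspace (discrete_topology ?V)" by auto
  have QV: "Q \<subseteq> VA" using Q unfolding gconnected_def by auto
  have s: "\<And>x y. (x,y) \<in> EA \<Longrightarrow> (y,x) \<in> EA" and sub: "EA \<subseteq> VA \<times> VA"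
    and rf: "\<And>x. x \<in> VA \<Longrightarrow> (x,x) \<in> EA"
    using G unfolding graph_def by blast+
  assume "gdisconnected (discrete_topology ?V) ?E {n \<in> ?V. gB n \<in> Q}"
  then obtain P R where PR: "P \<noteq> {}" "R \<noteq> {}" "P \<union> R = Pre" "\<forall>p\<in>P. \<forall>r\<in>R. (p, r) \<notin> ?E"
    unfolding gdisconnected_def Pre_def by blast
  have side: "n \<in> P \<longleftrightarrow> m \<in> P" if "n \<in> Pre" "m \<in> Pre" "(n,m) \<in> ?E" for n m
  proof -
    have "(m,n) \<in> ?E" using EB_sym[OF G that(3)] .
    then show ?thesis using that PR(3,4) by blast
  qed
  have VbPre: "Vb u \<in> Pre" if "u \<in> Q" for u using that QV unfolding Pre_def VB_def by auto
  have HbPre: "Hb u v \<in> Pre" if "u \<in> Q" "(u,v) \<in> EA" "u \<noteq> v" for u v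
    using that unfolding Pre_def VB_def by auto
  have HV: "Hb u v \<in> P \<longleftrightarrow> Vb u \<in> P" if "u \<in> Q" "(u,v) \<in> EA" "u \<noteq> v" for u v
  proof -
    have "(Hb u v, Vb u) \<in> ?E" using that unfolding EB_def by blast
    then show ?thesis using side HbPre[OF that] VbPre[OF that(1)] by blast
  qed
  define PA where "PA = {u \<in> Q. Vb u \<in> P}"
  define RA where "RA = {u \<in> Q. Vb u \<notin> P}"
  have "gdisconnected (discrete_topology VA) EA Q"
    unfolding gdisconnected_def
  proof (intro exI conjI)
    show "PA \<noteq> {}"
    proof -
      obtain n where n: "n \<in> P" using PR(1) by blast
      then have nPre: "n \<in> Pre" using PR(3) by blast
      then have "n \<in> ?V" "gB n \<in> Q" unfolding Pre_def by auto
      then consider u where "n = Vb u" "u \<in> VA" | u v where "n = Hb u v" "(u,v) \<in> EA" "u \<noteq> v"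
        unfolding VB_def by blast
      then show ?thesis
      proof cases
        case 1 then show ?thesis using n \<open>gB n \<in> Q\<close> unfolding PA_def by auto
      next
        case 2 then have "u \<in> Q" using \<open>gB n \<in> Q\<close> by simp
        then show ?thesis using HV[OF \<open>u \<in> Q\<close> 2(2,3)] n 2(1) unfolding PA_def by auto
      qed
    qed
    show "RA \<noteq> {}"
    proof -
      obtain n where n: "n \<in> R" using PR(2) by blast
      then have nPre: "n \<in> Pre" using PR(3) by blast
      have nP: "n \<notin> P"
      proof
        assume "n \<in> P"
        have "(n,n) \<in> ?E" using nPre unfolding Pre_def EB_def by auto
        then show False using PR(4) n \<open>n \<in> P\<close> by blast
      qed
      have "n \<in> ?V" "gB n \<in> Q" using nPre unfolding Pre_def by auto
      then consider u where "n = Vb u" "u \<in> VA" | u v where "n = Hb u v" "(u,v) \<in> EA" "u \<noteq> v"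
        unfolding VB_def by blast
      then show ?thesis
      proof cases
        case 1 then show ?thesis using nP \<open>gB n \<in> Q\<close> unfolding RA_def by auto
      next
        case 2 then have "u \<in> Q" using \<open>gB n \<in> Q\<close> by simp
        then show ?thesis using HV[OF \<open>u \<in> Q\<close> 2(2,3)] nP 2(1) unfolding RA_def by auto
      qed
    qed
    show "closedin (subtopology (discrete_topology VA) Q) PA" unfolding PA_def using QV by auto
    show "closedin (subtopology (discrete_topology VA) Q) RA" unfolding RA_def using QV by auto
    show "PA \<union> RA = Q" unfolding PA_def RA_def by auto
    show "\<forall>p\<in>PA. \<forall>q\<in>RA. (p, q) \<notin> EA"
    proof (intro ballI notI)
      fix u w assume u: "u \<in> PA" and w: "w \<in> RA" and uw: "(u,w) \<in> EA"
      then have "u \<noteq> w" unfolding PA_def RA_def by auto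
      have uQ: "u \<in> Q" and wQ: "w \<in> Q" using u w unfolding PA_def RA_def by auto
      have "Hb u w \<in> P" using HV[OF uQ uw \<open>u \<noteq> w\<close>] u unfolding PA_def by auto
      moreover have "Hb w u \<notin> P" using HV[OF wQ s[OF uw]] \<open>u \<noteq> w\<close> w unfolding RA_def by auto
      moreover have "(Hb u w, Hb w u) \<in> ?E" using uw \<open>u \<noteq> w\<close> unfolding EB_def by blast
      moreover have "Hb u w \<in> Pre" "Hb w u \<in> Pre" using HbPre uQ wQ uw s[OF uw] \<open>u \<noteq> w\<close> by auto
      ultimately show False using side by blast
    qed
  qed
  then show False using Q unfolding gconnected_def by blast
qed

lemma in_G_B:
  assumes "in_G VA EA"
  shows "in_G (VB VA EA) (EB VA EA)"
proof -
  have G: "graph VA EA" and fin: "finite VA" and ne: "VA \<noteq> {}" and con: "gconnected (discrete_topology VA) EA VA"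
    using assms unfolding in_G_def by auto
  have sub: "EA \<subseteq> VA \<times> VA" using G unfolding graph_def by blast
  have "finite EA" using finite_subset[OF sub] fin by blast
  then have "finite ((\<lambda>(u,v). Hb u v) ` EA)" by blast
  moreover have "{Hb u v |u v. (u,v) \<in> EA \<and> u \<noteq> v} \<subseteq> (\<lambda>(u,v). Hb u v) ` EA" by force
  ultimately have "finite (VB VA EA)" unfolding VB_def using fin finite_subset by blast
  moreover have "VB VA EA \<noteq> {}" using ne unfolding VB_def by auto
  moreover have "graph (VB VA EA) (EB VA EA)"
    unfolding graph_def
  proof (intro conjI allI impI ballI)
    show "EB VA EA \<subseteq> VB VA EA \<times> VB VA EA" using EB_sub[OF G] by auto
    show "(x,x) \<in> EB VA EA" if "x \<in> VB VA EA" for x using that unfolding EB_def by auto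
    show "(y,x) \<in> EB VA EA" if "(x,y) \<in> EB VA EA" for x y using EB_sym[OF G that] .
  qed
  moreover have "{n \<in> VB VA EA. gB n \<in> VA} = VB VA EA" using VB_gB[OF G] by auto
  then have "gconnected (discrete_topology (VB VA EA)) (EB VA EA) (VB VA EA)"
    using pre_connected[OF G con] by simp
  ultimately show ?thesis unfolding in_G_def by blast
qed

lemma confluent_gB:
  assumes "in_G VA EA"
  shows "confluent (discrete_topology (VB VA EA)) (EB VA EA) (discrete_topology VA) EA gB"
proof -
  have G: "graph VA EA" using assms unfolding in_G_def by auto
  have s: "\<And>x y. (x,y) \<in> EA \<Longrightarrow> (y,x) \<in> EA" and sub: "EA \<subseteq> VA \<times> VA"
    and rf: "\<And>x. x \<in> VA \<Longrightarrow> (x,x) \<in> EA"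
    using G unfolding graph_def by blast+
  have epi: "epimorphism (discrete_topology (VB VA EA)) (EB VA EA) (discrete_topology VA) EA gB"
    unfolding epimorphism_def
  proof (intro conjI allI impI)
    show "continuous_map (discrete_topology (VB VA EA)) (discrete_topology VA) gB"
      using VB_gB[OF G] by auto
    show "(gB x, gB y) \<in> EA" if "(x, y) \<in> EB VA EA" for x y
      using that
    proof (cases rule: EB_cases)
      case 1 then show ?thesis using rf VB_gB[OF G] by auto
    next
      case (2 u v) then show ?thesis using rf sub by auto
    next
      case (3 u v) then show ?thesis using rf sub by auto
    next
      case (4 u v) then show ?thesis by auto
    qed
    show "gB ` topspace (discrete_topology (VB VA EA)) = topspace (discrete_topology VA)"
    proof -
      have "gB ` VB VA EA \<subseteq> VA" using VB_gB[OF G] by auto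
      moreover have "VA \<subseteq> gB ` VB VA EA"
      proof
        fix u assume "u \<in> VA"
        then have "Vb u \<in> VB VA EA" unfolding VB_def by auto
        then show "u \<in> gB ` VB VA EA" by (metis gB_Vb image_eqI)
      qed
      ultimately show ?thesis by auto
    qed
    show "\<exists>x y. (x, y) \<in> EB VA EA \<and> gB x = a \<and> gB y = b" if "(a, b) \<in> EA" for a b
    proof (cases "a = b")
      case True
      then have "Vb a \<in> VB VA EA" using that sub unfolding VB_def by auto
      then have "(Vb a, Vb a) \<in> EB VA EA" unfolding EB_def by auto
      then show ?thesis using True by (intro exI[of _ "Vb a"]) auto
    next
      case False
      then have "(Hb a b, Hb b a) \<in> EB VA EA" using that unfolding EB_def by blast
      then show ?thesis by (intro exI[of _ "Hb a b"] exI[of _ "Hb b a"]) auto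
    qed
  qed
  show ?thesis unfolding confluent_def
  proof (intro conjI epi allI impI)
    fix Q C assume QC: "gconnected (discrete_topology VA) EA Q \<and>
      gcomponent (discrete_topology (VB VA EA)) (EB VA EA) {x \<in> topspace (discrete_topology (VB VA EA)). gB x \<in> Q} C"
    have QV: "Q \<subseteq> VA" using QC unfolding gconnected_def by auto
    have pc: "gconnected (discrete_topology (VB VA EA)) (EB VA EA) {n \<in> VB VA EA. gB n \<in> Q}"
      using pre_connected[OF G] QC by blast
    have "C = {n \<in> VB VA EA. gB n \<in> Q}"
      using QC pc unfolding gcomponent_def by auto
    moreover have "gB ` {n \<in> VB VA EA. gB n \<in> Q} = Q"
    proof
      show "gB ` {n \<in> VB VA EA. gB n \<in> Q} \<subseteq> Q" by auto
      show "Q \<subseteq> gB ` {n \<in> VB VA EA. gB n \<in> Q}"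
      proof
        fix u assume "u \<in> Q"
        then have "Vb u \<in> {n \<in> VB VA EA. gB n \<in> Q}" using QV unfolding VB_def by auto
        then show "u \<in> gB ` {n \<in> VB VA EA. gB n \<in> Q}" by (metis gB_Vb image_eqI)
      qed
    qed
    ultimately show "gB ` C = Q" by simp
  qed
qed

lemma hausdist_le:
  fixes \<rho> :: "'b \<Rightarrow> 'b \<Rightarrow> real"
  assumes A: "A \<noteq> {}" and B: "B \<noteq> {}" and nn: "\<And>x y. \<rho> x y \<ge> 0"
    and AB: "\<forall>a\<in>A. \<exists>b\<in>B. \<rho> a b \<le> e" and BA: "\<forall>b\<in>B. \<exists>a\<in>A. \<rho> a b \<le> e"
  shows "\<bar>hausdist_m \<rho> A B\<bar> \<le> e"
proof -
  have bbB: "bdd_below ((\<lambda>b. \<rho> a b) ` B)" for a by (rule bdd_belowI[of _ 0]) (auto simp: nn)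
  have bbA: "bdd_below ((\<lambda>a. \<rho> a b) ` A)" for b by (rule bdd_belowI[of _ 0]) (auto simp: nn)
  have i1: "(INF b\<in>B. \<rho> a b) \<le> e" if "a \<in> A" for a
    using AB that bbB cINF_lower2 by metis
  have i1': "0 \<le> (INF b\<in>B. \<rho> a b)" for a using B nn by (intro cINF_greatest) auto
  have i2: "(INF a\<in>A. \<rho> a b) \<le> e" if "b \<in> B" for b
    using BA that bbA cINF_lower2 by metis
  have i2': "0 \<le> (INF a\<in>A. \<rho> a b)" for b using A nn by (intro cINF_greatest) auto
  have s1: "(SUP a\<in>A. INF b\<in>B. \<rho> a b) \<le> e" using A i1 by (intro cSUP_least) auto
  have s2: "(SUP b\<in>B. INF a\<in>A. \<rho> a b) \<le> e" using B i2 by (intro cSUP_least) auto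
  obtain a0 where a0: "a0 \<in> A" using A by blast
  obtain b0 where b0: "b0 \<in> B" using B by blast
  have "bdd_above ((\<lambda>a. INF b\<in>B. \<rho> a b) ` A)" using i1 by (intro bdd_aboveI[of _ e]) auto
  then have s1': "0 \<le> (SUP a\<in>A. INF b\<in>B. \<rho> a b)" using a0 i1' by (intro cSUP_upper2) auto
  have "bdd_above ((\<lambda>b. INF a\<in>A. \<rho> a b) ` B)" using i2 by (intro bdd_aboveI[of _ e]) auto
  then have s2': "0 \<le> (SUP b\<in>B. INF a\<in>A. \<rho> a b)" using b0 i2' by (intro cSUP_upper2) auto
  show ?thesis unfolding hausdist_m_def using s1 s2 s1' s2' by auto
qed

lemma seq_choice:
  fixes h :: "'b \<Rightarrow> real" and P :: "nat \<Rightarrow> 'b \<Rightarrow> bool"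
  assumes ex: "\<And>n. \<exists>L. P n L"
    and cl: "\<And>e. e > 0 \<Longrightarrow> \<exists>N. \<forall>n\<ge>N. \<exists>L. P n L \<and> \<bar>h L\<bar> \<le> e"
  shows "\<exists>Kn. (\<forall>n. P n (Kn n)) \<and> (\<lambda>n. h (Kn n)) \<longlonglongrightarrow> 0"
proof -
  define S where "S n = (\<lambda>L. \<bar>h L\<bar>) ` {L. P n L}" for n
  have Sne: "S n \<noteq> {}" for n using ex[of n] unfolding S_def by auto
  have Sbb: "bdd_below (S n)" for n unfolding S_def by (rule bdd_belowI[of _ 0]) auto
  have "\<exists>L. P n L \<and> \<bar>h L\<bar> < Inf (S n) + 1 / (real n + 1)" for n
  proof -
    have "Inf (S n) < Inf (S n) + 1 / (real n + 1)" by simp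
    then obtain x where "x \<in> S n" "x < Inf (S n) + 1 / (real n + 1)" using cInf_lessD[OF Sne] by blast
    then show ?thesis unfolding S_def by auto
  qed
  then obtain Kn where Kn: "\<And>n. P n (Kn n) \<and> \<bar>h (Kn n)\<bar> < Inf (S n) + 1 / (real n + 1)" by metis
  have "(\<lambda>n. h (Kn n)) \<longlonglongrightarrow> 0"
  proof (rule LIMSEQ_I)
    fix r :: real assume r: "r > 0"
    obtain N1 where N1: "\<forall>n\<ge>N1. \<exists>L. P n L \<and> \<bar>h L\<bar> \<le> r/2" using cl[of "r/2"] r by auto
    obtain N2 :: nat where N2: "1 / (real N2 + 1) < r/2"
    proof -
      obtain k :: nat where "inverse (real (Suc k)) < r/2" using r reals_Archimedean[of "r/2"] by auto
      then show ?thesis using that[of k] by (simp add: field_simps)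
    qed
    show "\<exists>no. \<forall>n\<ge>no. norm (h (Kn n) - 0) < r"
    proof (intro exI allI impI)
      fix n assume n: "n \<ge> max N1 N2"
      then obtain L where L: "P n L" "\<bar>h L\<bar> \<le> r/2" using N1 by auto
      have "Inf (S n) \<le> \<bar>h L\<bar>" using L(1) Sbb unfolding S_def by (intro cInf_lower) auto
      moreover have "1 / (real n + 1) \<le> 1 / (real N2 + 1)" using n by (intro divide_left_mono) auto
      ultimately show "norm (h (Kn n) - 0) < r" using Kn[of n] L(2) N2 by auto
    qed
  qed
  then show ?thesis using Kn by blast
qed

lemma E_trans:
  assumes fl: "fraisse_limit_G M d E" and xy: "(x,y) \<in> E" and yz: "(y,z) \<in> E"
  shows "(x,z) \<in> E"
proof (rule ccontr)
  assume nxz: "(x,z) \<notin> E"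
  have tg: "topological_graph M d E" using fl unfolding fraisse_limit_G_def by blast
  have ext: "\<forall>VA EA VB EB f g. in_G VA EA \<and> in_G VB EB \<and>
        confluent (Metric_space.mtopology M d) E (discrete_topology VA) EA f \<and>
        confluent (discrete_topology VB) EB (discrete_topology VA) EA g \<longrightarrow>
        (\<exists>h. confluent (Metric_space.mtopology M d) E (discrete_topology VB) EB h \<and>
             (\<forall>x\<in>M. f x = g (h x)))"
    using fl unfolding fraisse_limit_G_def by blast
  have fine: "\<forall>\<epsilon>>0. \<exists>VA EA f. in_G VA EA \<and>
        confluent (Metric_space.mtopology M d) E (discrete_topology VA) EA f \<and>
        (\<forall>a\<in>VA. mdiam d {x \<in> M. f x = a} < \<epsilon>)"
    using fl unfolding fraisse_limit_G_def by blast
  have ms: "Metric_space M d" and cpt: "compact_space (Metric_space.mtopology M d)" and G: "graph M E"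
    using tg unfolding topological_graph_def by blast+
  interpret Metric_space M d by (rule ms)
  have sub: "E \<subseteq> M \<times> M" and rf: "\<And>x. x \<in> M \<Longrightarrow> (x,x) \<in> E"
    using G unfolding graph_def by blast+
  have xM: "x \<in> M" and yM: "y \<in> M" and zM: "z \<in> M" using xy yz sub by auto
  have "x \<noteq> z" using nxz rf xM by auto
  have "x \<noteq> y" using nxz yz by auto
  have "y \<noteq> z" using nxz xy by auto
  define \<epsilon> where "\<epsilon> = min (d x y) (min (d y z) (d x z))"
  have "d x y > 0" "d y z > 0" "d x z > 0"
    using \<open>x \<noteq> y\<close> \<open>y \<noteq> z\<close> \<open>x \<noteq> z\<close> xM yM zM nonneg zero by (metis less_eq_real_def)+
  then have "\<epsilon> > 0" unfolding \<epsilon>_def by auto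
  then obtain VA EA f where A: "in_G VA EA" and cf: "confluent mtopology E (discrete_topology VA) EA f"
    and mesh: "\<forall>a\<in>VA. mdiam d {x \<in> M. f x = a} < \<epsilon>"
    using fine by blast
  have epi: "epimorphism mtopology E (discrete_topology VA) EA f" using cf unfolding confluent_def by blast
  have fM: "f ` M = VA" using epi unfolding epimorphism_def by simp
  have homf: "\<And>u v. (u,v) \<in> E \<Longrightarrow> (f u, f v) \<in> EA" using epi unfolding epimorphism_def by blast
  have sep: "f u \<noteq> f v" if "u \<in> M" "v \<in> M" "d u v \<ge> \<epsilon>" for u v
  proof
    assume eq: "f u = f v"
    have "f u \<in> VA" using fM that by blast
    then have "mdiam d {x \<in> M. f x = f u} < \<epsilon>" using mesh by blast
    moreover have "d u v \<le> mdiam d {x \<in> M. f x = f u}"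
      using mdiam_ge[OF cpt, of "{x \<in> M. f x = f u}" u v] that eq by auto
    ultimately show False using that by linarith
  qed
  have fxz: "f x \<noteq> f z" using sep[OF xM zM] unfolding \<epsilon>_def by auto
  have fxy: "f x \<noteq> f y" using sep[OF xM yM] unfolding \<epsilon>_def by auto
  have fyz: "f y \<noteq> f z" using sep[OF yM zM] unfolding \<epsilon>_def by auto
  have B: "in_G (VB VA EA) (EB VA EA)" using in_G_B[OF A] .
  have cg: "confluent (discrete_topology (VB VA EA)) (EB VA EA) (discrete_topology VA) EA gB"
    using confluent_gB[OF A] .
  obtain h where ch: "confluent mtopology E (discrete_topology (VB VA EA)) (EB VA EA) h"
    and fac: "\<forall>x\<in>M. f x = gB (h x)"
    using ext A B cf cg by blast
  have homh: "\<And>u v. (u,v) \<in> E \<Longrightarrow> (h u, h v) \<in> EB VA EA"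
    using ch unfolding confluent_def epimorphism_def by blast
  have GA: "graph VA EA" using A unfolding in_G_def by blast
  have e1: "(h y, h x) \<in> EB VA EA" using EB_sym[OF GA homh[OF xy]] .
  have e2: "(h y, h z) \<in> EB VA EA" using homh[OF yz] .
  have "h y = Hb (gB (h y)) (gB (h x))"
    using EB_diff[OF e1] fac xM yM fxy by metis
  moreover have "h y = Hb (gB (h y)) (gB (h z))"
    using EB_diff[OF e2] fac zM yM fyz by metis
  ultimately have "gB (h x) = gB (h z)" by (metis Hb_inj)
  then show False using fac xM zM fxz by metis
qed

theorem mainTheorem3:
  fixes M :: "'a set" and d :: "'a \<Rightarrow> 'a \<Rightarrow> real" and E :: "('a \<times> 'a) set"
  assumes "fraisse_limit_G M d E"
  shows "kelley_continuum (realization (Metric_space.mtopology M d) E)"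
proof -
  note fl = assms
  have tg: "topological_graph M d E" using fl unfolding fraisse_limit_G_def by blast
  have fine: "\<forall>\<epsilon>>0. \<exists>VA EA f. in_G VA EA \<and>
        confluent (Metric_space.mtopology M d) E (discrete_topology VA) EA f \<and>
        (\<forall>a\<in>VA. mdiam d {x \<in> M. f x = a} < \<epsilon>)"
    using fl unfolding fraisse_limit_G_def by blast
  have ms: "Metric_space M d" and cpt: "compact_space (Metric_space.mtopology M d)" and G: "graph M E"
    and sc: "second_countable (Metric_space.mtopology M d)"
    and Ecl: "closedin (prod_topology (Metric_space.mtopology M d) (Metric_space.mtopology M d)) E"
    using tg unfolding topological_graph_def by blast+
  interpret Metric_space M d by (rule ms)
  have sub: "E \<subseteq> M \<times> M" and rf: "\<And>x. x \<in> M \<Longrightarrow> (x,x) \<in> E"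
    and sy: "\<And>x y. (x,y) \<in> E \<Longrightarrow> (y,x) \<in> E"
    using G unfolding graph_def by blast+
  have tr: "\<And>x y z. (x,y) \<in> E \<Longrightarrow> (y,z) \<in> E \<Longrightarrow> (x,z) \<in> E"
    using E_trans[OF fl] by blast
  have qs: "qsetup M d E"
    apply (rule qsetup.intro[OF ms], rule qsetup_axioms.intro)
    using cpt apply simp
    using Ecl apply simp
    using sub apply simp
    using rf apply simp
    using sy apply simp
    apply (rule tr, assumption, assumption)
    done
  interpret qsetup M d E by (rule qs)
  let ?X = "realization mtopology E"
  let ?q = "eclass M E"
  have rfT: "\<forall>x\<in>topspace mtopology. (x,x) \<in> E" using rf by simp
  have fine2: "\<exists>VA EA f. in_G VA EA \<and> confluent mtopology E (discrete_topology VA) EA f \<and>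
      (\<forall>u\<in>M. \<forall>v\<in>M. f u = f v \<longrightarrow> d u v < l)" if l: "l > 0" for l
  proof -
    obtain VA EA f where A: "in_G VA EA" and cf: "confluent mtopology E (discrete_topology VA) EA f"
      and mesh: "\<forall>a\<in>VA. mdiam d {x \<in> M. f x = a} < l"
      using fine l by blast
    have epi: "epimorphism mtopology E (discrete_topology VA) EA f" using cf unfolding confluent_def by blast
    have fM: "f ` M = VA" using epi unfolding epimorphism_def by simp
    have "d u v < l" if "u \<in> M" "v \<in> M" "f u = f v" for u v
    proof -
      have "f u \<in> VA" using fM that by blast
      then have "mdiam d {x \<in> M. f x = f u} < l" using mesh by blast
      moreover have "d u v \<le> mdiam d {x \<in> M. f x = f u}"
        using mdiam_ge[OF cpt, of "{x \<in> M. f x = f u}" u v] that by auto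
      ultimately show ?thesis by linarith
    qed
    then show ?thesis using A cf by blast
  qed
  have Mne: "M \<noteq> {}"
  proof -
    obtain VA EA f where A: "in_G VA EA" and cf: "confluent mtopology E (discrete_topology VA) EA f"
      using fine2[of 1] by auto
    have "f ` M = VA" using cf unfolding confluent_def epimorphism_def by simp
    moreover have "VA \<noteq> {}" using A unfolding in_G_def by blast
    ultimately show ?thesis by auto
  qed
  have Xne: "topspace ?X \<noteq> {}" using Mne topX by auto
  have Xcpt: "compact_space ?X" by (rule X_compact)
  have Xmet: "metrizable_space ?X" by (rule X_metrizable[OF sc])
  have XH: "Hausdorff_space ?X" using X_normal_Hausdorff by blast
  have Xconn: "connected_space ?X"
    unfolding connected_space_def
  proof
    assume "\<exists>E1 E2. openin ?X E1 \<and> openin ?X E2 \<and> topspace ?X \<subseteq> E1 \<union> E2 \<and> E1 \<inter> E2 = {} \<and> E1 \<noteq> {} \<and> E2 \<noteq> {}"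
    then obtain U V where UV: "openin ?X U" "openin ?X V" "topspace ?X \<subseteq> U \<union> V" "U \<inter> V = {}" "U \<noteq> {}" "V \<noteq> {}"
      by blast
    define P where "P = {x\<in>M. ?q x \<in> U}"
    define R where "R = {x\<in>M. ?q x \<in> V}"
    have Po: "openin mtopology P" using UV(1) unfolding openX P_def by blast
    have Ro: "openin mtopology R" using UV(2) unfolding openX R_def by blast
    have cov: "M \<subseteq> \<Union>{P, R}" using UV(3) topX unfolding P_def R_def by auto
    obtain l where l: "l > 0" and leb: "\<forall>S. S \<subseteq> M \<and> S \<noteq> {} \<and> (\<forall>x\<in>S. \<forall>y\<in>S. d x y < l) \<longrightarrow> (\<exists>U\<in>{P,R}. S \<subseteq> U)"
    proof -
      have "\<forall>U\<in>{P,R}. openin mtopology U" using Po Ro by auto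
      from lebesgue_number[OF cpt this cov] show ?thesis using that by blast
    qed
    obtain VA EA f where A: "in_G VA EA" and cf: "confluent mtopology E (discrete_topology VA) EA f"
      and mesh: "\<forall>u\<in>M. \<forall>v\<in>M. f u = f v \<longrightarrow> d u v < l"
      using fine2[OF l] by blast
    have epi: "epimorphism mtopology E (discrete_topology VA) EA f" using cf unfolding confluent_def by blast
    have fM: "f ` M = VA" using epi unfolding epimorphism_def by simp
    have esurj: "\<And>a b. (a,b) \<in> EA \<Longrightarrow> \<exists>x y. (x,y) \<in> E \<and> f x = a \<and> f y = b"
      using epi unfolding epimorphism_def by blast
    have PR: "P \<inter> R = {}" using UV(4) unfolding P_def R_def by auto
    have fib: "{w\<in>M. f w = a} \<subseteq> P \<or> {w\<in>M. f w = a} \<subseteq> R" if aV: "a \<in> VA" for a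
    proof -
      define S where "S = {w\<in>M. f w = a}"
      have "S \<noteq> {}" using aV fM unfolding S_def by auto
      moreover have "S \<subseteq> M" unfolding S_def by auto
      moreover have "\<forall>x\<in>S. \<forall>y\<in>S. d x y < l" using mesh unfolding S_def by auto
      ultimately have "\<exists>U\<in>{P,R}. S \<subseteq> U" using leb[rule_format, of S] by blast
      then have "S \<subseteq> P \<or> S \<subseteq> R" by simp
      then show ?thesis unfolding S_def .
    qed
    define PA where "PA = {a\<in>VA. {w\<in>M. f w = a} \<subseteq> P}"
    define RA where "RA = {a\<in>VA. {w\<in>M. f w = a} \<subseteq> R}"
    have side: "x \<in> P \<Longrightarrow> f x \<in> PA" "x \<in> R \<Longrightarrow> f x \<in> RA" for x
    proof -
      assume x: "x \<in> P"
      then have "x \<in> M" unfolding P_def by auto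
      then have "f x \<in> VA" using fM by auto
      then show "f x \<in> PA" using fib[of "f x"] x PR \<open>x \<in> M\<close> unfolding PA_def by blast
    next
      assume x: "x \<in> R"
      then have "x \<in> M" unfolding R_def by auto
      then have "f x \<in> VA" using fM by auto
      then show "f x \<in> RA" using fib[of "f x"] x PR \<open>x \<in> M\<close> unfolding RA_def by blast
    qed
    have "gdisconnected (discrete_topology VA) EA VA"
      unfolding gdisconnected_def
    proof (intro exI conjI)
      show "PA \<noteq> {}"
      proof -
        obtain u where "u \<in> U" using UV(5) by blast
        then have "u \<in> ?q ` M" using openin_subset[OF UV(1)] topX by blast
        then obtain x where "x \<in> M" "?q x = u" by blast
        then have "x \<in> P" using \<open>u \<in> U\<close> unfolding P_def by auto
        then show ?thesis using side by blast
      qed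
      show "RA \<noteq> {}"
      proof -
        obtain u where "u \<in> V" using UV(6) by blast
        then have "u \<in> ?q ` M" using openin_subset[OF UV(2)] topX by blast
        then obtain x where "x \<in> M" "?q x = u" by blast
        then have "x \<in> R" using \<open>u \<in> V\<close> unfolding R_def by auto
        then show ?thesis using side by blast
      qed
      show "closedin (subtopology (discrete_topology VA) VA) PA" unfolding PA_def by auto
      show "closedin (subtopology (discrete_topology VA) VA) RA" unfolding RA_def by auto
      show "PA \<union> RA = VA"
      proof
        show "PA \<union> RA \<subseteq> VA" unfolding PA_def RA_def by blast
        show "VA \<subseteq> PA \<union> RA"
        proof
          fix a assume "a \<in> VA"
          then show "a \<in> PA \<union> RA" using fib[of a] unfolding PA_def RA_def by blast
        qed
      qed
      show "\<forall>p\<in>PA. \<forall>q\<in>RA. (p, q) \<notin> EA"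
      proof (intro ballI notI)
        fix a b assume a: "a \<in> PA" and b: "b \<in> RA" and ab: "(a,b) \<in> EA"
        obtain x y where xy: "(x,y) \<in> E" "f x = a" "f y = b" using esurj[OF ab] by blast
        have "x \<in> M" "y \<in> M" using xy sub by auto
        then have "x \<in> P" "y \<in> R" using a b xy unfolding PA_def RA_def by auto
        moreover have "?q x = ?q y" using q_edge[OF xy(1)] .
        ultimately show False using UV(4) unfolding P_def R_def by auto
      qed
    qed
    then show False using A unfolding in_G_def gconnected_def by blast
  qed
  have cont: "continuum ?X" unfolding continuum_def using Xne Xcpt Xconn Xmet by blast
  have kel: "\<exists>Kn. (\<forall>n. subcontinuum ?X (Kn n) \<and> pn n \<in> Kn n) \<and> (\<lambda>n. hausdist_m \<rho> (Kn n) K) \<longlonglongrightarrow> 0"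
    if rho: "Metric_space (topspace ?X) \<rho>" "Metric_space.mtopology (topspace ?X) \<rho> = ?X"
      and K: "subcontinuum ?X K" and pK: "p \<in> K" and pn: "range pn \<subseteq> topspace ?X"
      and lim: "limitin ?X pn p sequentially"
    for \<rho> K p pn
  proof -
    interpret R: Metric_space "topspace ?X" \<rho> by (rule rho(1))
    have Kne: "K \<noteq> {}" and Kc: "compactin ?X K" and Kconn: "connectedin ?X K"
      using K unfolding subcontinuum_def by auto
    have KX: "K \<subseteq> topspace ?X" using compactin_subset_topspace[OF Kc] .
    have Kcl: "closedin ?X K" using compactin_imp_closedin[OF XH Kc] .
    define K' where "K' = {x\<in>M. ?q x \<in> K}"
    have K'cl: "closedin mtopology K'" using Kcl[unfolded closedX] unfolding K'_def by (rule conjunct2)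
    have K'M: "K' \<subseteq> M" unfolding K'_def by auto
    have K'conn: "gconnected mtopology E K'"
      unfolding gconnected_def
    proof (intro conjI notI)
      show "K' \<subseteq> topspace mtopology" using K'M by simp
      assume "gdisconnected mtopology E K'"
      then obtain P0 R0 where PR: "P0 \<noteq> {}" "R0 \<noteq> {}" "closedin (subtopology mtopology K') P0"
        "closedin (subtopology mtopology K') R0" "P0 \<union> R0 = K'" "\<forall>p\<in>P0. \<forall>r\<in>R0. (p, r) \<notin> E"
        unfolding gdisconnected_def by blast
      have P0c: "closedin mtopology P0" using closedin_trans_full[OF PR(3) K'cl] .
      have R0c: "closedin mtopology R0" using closedin_trans_full[OF PR(4) K'cl] .
      have satP: "y \<in> P0" if "x \<in> P0" "y \<in> M" "?q y = ?q x" for x y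
      proof -
        have "x \<in> K'" using that PR(5) by blast
        then have "y \<in> K'" using that unfolding K'_def by auto
        have xM: "x \<in> M" using \<open>x \<in> K'\<close> K'M by blast
        have "(x,y) \<in> E" using q_eq[OF xM that(2)] that(3) by simp
        then have "y \<notin> R0" using PR(6) that by blast
        then show ?thesis using \<open>y \<in> K'\<close> PR(5) by blast
      qed
      have c1: "closedin ?X (?q ` P0)" using closedq P0c unfolding closed_map_def by blast
      have c2: "closedin ?X (?q ` R0)" using closedq R0c unfolding closed_map_def by blast
      have c3: "K \<subseteq> ?q ` P0 \<union> ?q ` R0"
      proof
        fix k assume "k \<in> K"
        then have "k \<in> ?q ` M" using subsetD[OF KX] topX by simp
        then obtain m where "m \<in> M" "?q m = k" by blast
        then have "m \<in> K'" using \<open>k \<in> K\<close> unfolding K'_def by auto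
        then show "k \<in> ?q ` P0 \<union> ?q ` R0" using PR(5) \<open>?q m = k\<close> by blast
      qed
      have c4: "?q ` P0 \<inter> ?q ` R0 \<inter> K = {}"
      proof (rule ccontr)
        assume "?q ` P0 \<inter> ?q ` R0 \<inter> K \<noteq> {}"
        then obtain p r where pr: "p \<in> P0" "r \<in> R0" "?q p = ?q r" by blast
        have "r \<in> M" using pr PR(5) K'M by blast
        then have "r \<in> P0" using satP[OF pr(1)] pr(3) by metis
        then show False using PR(6) pr(2) rf \<open>r \<in> M\<close> by blast
      qed
      have c5: "?q ` P0 \<inter> K \<noteq> {}"
      proof -
        obtain x where "x \<in> P0" using PR(1) by blast
        then have "?q x \<in> K" using PR(5) unfolding K'_def by blast
        then show ?thesis using \<open>x \<in> P0\<close> by blast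
      qed
      have c6: "?q ` R0 \<inter> K \<noteq> {}"
      proof -
        obtain x where "x \<in> R0" using PR(2) by blast
        then have "?q x \<in> K" using PR(5) unfolding K'_def by blast
        then show ?thesis using \<open>x \<in> R0\<close> by blast
      qed
      have "\<exists>E1 E2. closedin ?X E1 \<and> closedin ?X E2 \<and> K \<subseteq> E1 \<union> E2 \<and> E1 \<inter> E2 \<inter> K = {} \<and> E1 \<inter> K \<noteq> {} \<and> E2 \<inter> K \<noteq> {}"
        by (rule exI[of _ "?q ` P0"], rule exI[of _ "?q ` R0"]) (intro conjI c1 c2 c3 c4 c5 c6)
      then show False using Kconn unfolding connectedin_closedin by blast
    qed
    have claim: "\<exists>N. \<forall>n\<ge>N. \<exists>L. (subcontinuum ?X L \<and> pn n \<in> L) \<and> \<bar>hausdist_m \<rho> L K\<bar> \<le> e"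
      if e: "e > 0" for e
    proof -
      define \<U> where "\<U> = (\<lambda>w. {x\<in>M. ?q x \<in> R.mball w (e/2)}) ` topspace ?X"
      have Uo: "\<forall>U\<in>\<U>. openin mtopology U"
      proof
        fix U assume "U \<in> \<U>"
        then obtain w where U: "U = {x\<in>M. ?q x \<in> R.mball w (e/2)}" unfolding \<U>_def by blast
        have "openin ?X (R.mball w (e/2))" using R.openin_mball[of w "e/2"] rho(2) by simp
        then show "openin mtopology U" unfolding U openX by (rule conjunct2)
      qed
      have Ucov: "M \<subseteq> \<Union>\<U>"
      proof
        fix x assume x: "x \<in> M"
        then have "?q x \<in> topspace ?X" using topX by simp
        then have "x \<in> {y\<in>M. ?q y \<in> R.mball (?q x) (e/2)}" using x e by auto
        then show "x \<in> \<Union>\<U>" unfolding \<U>_def using \<open>?q x \<in> topspace ?X\<close> by blast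
      qed
      obtain l where l: "l > 0" and leb: "\<forall>S. S \<subseteq> M \<and> S \<noteq> {} \<and> (\<forall>x\<in>S. \<forall>y\<in>S. d x y < l) \<longrightarrow> (\<exists>U\<in>\<U>. S \<subseteq> U)"
        using lebesgue_number[OF cpt Uo Ucov] by blast
      obtain VA EA f where A: "in_G VA EA" and cf: "confluent mtopology E (discrete_topology VA) EA f"
        and mesh: "\<forall>u\<in>M. \<forall>v\<in>M. f u = f v \<longrightarrow> d u v < l"
        using fine2[OF l] by blast
      have epi: "epimorphism mtopology E (discrete_topology VA) EA f" using cf unfolding confluent_def by blast
      have fM: "f ` M = VA" using epi unfolding epimorphism_def by simp
      have fcont: "continuous_map mtopology (discrete_topology VA) f" using epi unfolding epimorphism_def by blast
      have homf: "\<forall>x y. (x,y) \<in> E \<longrightarrow> (f x, f y) \<in> EA" using epi unfolding epimorphism_def by blast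
      have FP: "\<rho> (?q u) (?q v) \<le> e" if uv: "u \<in> M" "v \<in> M" "f u = f v" for u v
      proof -
        define S where "S = {w\<in>M. f w = f u}"
        have "S \<subseteq> M" "S \<noteq> {}" "\<forall>x\<in>S. \<forall>y\<in>S. d x y < l" using mesh uv unfolding S_def by auto
        then have "\<exists>U\<in>\<U>. S \<subseteq> U" using leb[rule_format, of S] by blast
        then obtain U where "U \<in> \<U>" "S \<subseteq> U" by blast
        then obtain w where w: "w \<in> topspace ?X" "S \<subseteq> {x\<in>M. ?q x \<in> R.mball w (e/2)}" unfolding \<U>_def by blast
        have "u \<in> S" "v \<in> S" using uv unfolding S_def by auto
        then have "?q u \<in> R.mball w (e/2)" "?q v \<in> R.mball w (e/2)" using w by auto
        then have "\<rho> w (?q u) < e/2" "\<rho> w (?q v) < e/2" "w \<in> topspace ?X"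
          "?q u \<in> topspace ?X" "?q v \<in> topspace ?X" by auto
        then show ?thesis using R.triangle[of "?q u" w "?q v"] R.commute[of "?q u" w] by linarith
      qed
      define Q where "Q = f ` K'"
      have Qc: "gconnected (discrete_topology VA) EA Q"
        unfolding Q_def by (rule gconnected_image_discrete[OF fcont homf K'conn])
      have QV: "Q \<subseteq> VA" using Qc unfolding gconnected_def by simp
      define W where "W = {x\<in>M. f x \<in> Q}"
      have Wcl: "closedin mtopology W"
      proof -
        have "closedin (discrete_topology VA) Q" using QV by simp
        then have "closedin mtopology {x \<in> topspace mtopology. f x \<in> Q}"
          by (rule closedin_continuous_map_preimage[OF fcont])
        then show ?thesis unfolding W_def by simp
      qed
      have Wop: "openin mtopology W"
      proof -
        have "openin (discrete_topology VA) Q" using QV by simp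
        then have "openin mtopology {x \<in> topspace mtopology. f x \<in> Q}"
          by (rule openin_continuous_map_preimage[OF fcont])
        then show ?thesis unfolding W_def by simp
      qed
      define Os where "Os = topspace ?X - ?q ` (M - W)"
      have Oo: "openin ?X Os"
      proof -
        have "closedin mtopology (M - W)" using Wop by (metis closedin_diff closedin_topspace topspace_mtopology)
        then have "closedin ?X (?q ` (M - W))" using closedq unfolding closed_map_def by blast
        then show ?thesis unfolding Os_def by blast
      qed
      have pO: "p \<in> Os"
      proof -
        have "p \<in> topspace ?X" using pK KX by blast
        moreover have "p \<notin> ?q ` (M - W)"
        proof
          assume "p \<in> ?q ` (M - W)"
          then obtain m where m: "m \<in> M" "m \<notin> W" "?q m = p" by blast
          then have "m \<in> K'" using pK unfolding K'_def by auto
          then have "f m \<in> Q" unfolding Q_def by blast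
          then show False using m unfolding W_def by blast
        qed
        ultimately show ?thesis unfolding Os_def by blast
      qed
      have "eventually (\<lambda>n. pn n \<in> Os) sequentially" using lim Oo pO unfolding limitin_def by blast
      then obtain N where N: "\<forall>n\<ge>N. pn n \<in> Os" unfolding eventually_sequentially by blast
      show ?thesis
      proof (rule exI[of _ N], intro allI impI)
        fix n assume "n \<ge> N"
        then have pnO: "pn n \<in> Os" using N by blast
        then obtain xn where xn: "xn \<in> M" "?q xn = pn n" unfolding Os_def topX by blast
        have xnW: "xn \<in> W" using pnO xn unfolding Os_def by blast
        define C where "C = \<Union>{S. S \<subseteq> W \<and> xn \<in> S \<and> gconnected mtopology E S}"
        have Ccomp: "gcomponent mtopology E W C" and xnC: "xn \<in> C" and Ccl: "closedin mtopology C"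
          using gcomponent_exists[OF rfT Wcl xnW] unfolding C_def by auto
        have Wtop: "{x \<in> topspace mtopology. f x \<in> Q} = W" unfolding W_def by simp
        have confl: "\<forall>Q C. gconnected (discrete_topology VA) EA Q \<and> gcomponent mtopology E {x \<in> topspace mtopology. f x \<in> Q} C \<longrightarrow> f ` C = Q"
          using cf unfolding confluent_def by blast
        have fC: "f ` C = Q" using confl[rule_format, of Q C] Qc Ccomp Wtop by simp
        have CW: "C \<subseteq> W" using Ccomp unfolding gcomponent_def by blast
        have CM: "C \<subseteq> M" using CW unfolding W_def by blast
        have Cconn: "gconnected mtopology E C" using Ccomp unfolding gcomponent_def by blast
        define L where "L = ?q ` C"
        have Lsub: "subcontinuum ?X L"
          unfolding subcontinuum_def
        proof (intro conjI)
          show "L \<noteq> {}" using xnC unfolding L_def by blast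
          have "compactin mtopology C" using closedin_compact_space[OF cpt Ccl] .
          then show "compactin ?X L" unfolding L_def by (rule image_compactin[OF _ contq])
          show "connectedin ?X L" unfolding L_def
            by (rule gconnected_image_connectedin[OF contq _ Cconn]) (use q_edge in blast)
        qed
        have pnL: "pn n \<in> L" using xnC xn unfolding L_def by blast
        have Lne: "L \<noteq> {}" using pnL by blast
        have "\<bar>hausdist_m \<rho> L K\<bar> \<le> e"
        proof (rule hausdist_le[OF Lne Kne])
          show "\<And>x y. 0 \<le> \<rho> x y" by simp
          show "\<forall>a\<in>L. \<exists>b\<in>K. \<rho> a b \<le> e"
          proof
            fix a assume "a \<in> L"
            then obtain c where c: "c \<in> C" "a = ?q c" unfolding L_def by blast
            then have "f c \<in> f ` C" by simp
            then have "f c \<in> Q" using fC by simp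
            then obtain c' where c': "c' \<in> K'" "f c' = f c" unfolding Q_def by (metis imageE)
            have cM: "c \<in> M" using CM c(1) by blast
            have c'M: "c' \<in> M" using K'M c'(1) by blast
            have "\<rho> (?q c) (?q c') \<le> e" using FP[OF cM c'M c'(2)[symmetric]] .
            moreover have "?q c' \<in> K" using c'(1) unfolding K'_def by simp
            ultimately show "\<exists>b\<in>K. \<rho> a b \<le> e" using c by blast
          qed
          show "\<forall>b\<in>K. \<exists>a\<in>L. \<rho> a b \<le> e"
          proof
            fix b assume "b \<in> K"
            then have "b \<in> ?q ` M" using subsetD[OF KX] topX by simp
            then obtain k where k: "k \<in> M" "?q k = b" by blast
            then have "k \<in> K'" using \<open>b \<in> K\<close> unfolding K'_def by auto
            then have "f k \<in> Q" unfolding Q_def by (rule imageI)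
            then have "f k \<in> f ` C" using fC by simp
            then obtain c where c: "c \<in> C" "f c = f k" by (metis imageE)
            have cM: "c \<in> M" using CM c(1) by blast
            have "\<rho> (?q c) (?q k) \<le> e" using FP[OF cM k(1) c(2)] .
            then show "\<exists>a\<in>L. \<rho> a b \<le> e" using c k unfolding L_def by blast
          qed
        qed
        then show "\<exists>L. (subcontinuum ?X L \<and> pn n \<in> L) \<and> \<bar>hausdist_m \<rho> L K\<bar> \<le> e"
          using Lsub pnL by blast
      qed
    qed
    have ex: "\<exists>L. subcontinuum ?X L \<and> pn n \<in> L" for n
    proof (intro exI conjI)
      show "subcontinuum ?X (topspace ?X)" unfolding subcontinuum_def
        using Xne Xcpt Xconn by (simp add: compact_space_def connectedin_topspace)
      show "pn n \<in> topspace ?X" using pn by auto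
    qed
    show ?thesis
      by (rule seq_choice[of "\<lambda>n L. subcontinuum ?X L \<and> pn n \<in> L" "\<lambda>L. hausdist_m \<rho> L K", OF ex claim])
  qed
  show ?thesis unfolding kelley_continuum_def using cont kel by blast
qed

end
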